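(* With notation as in the context, for all $1\le i,j\le m+n$ and $0\le r\le\ell$ the element $t^{(r)}_{ij;\mathfrak{b}}\in U(\mathfrak{p})$ is $\mathfrak{m}$-invariant under the $\chi$-twisted action, i.e. $\mathrm{pr}_\chi([x,t^{(r)}_{ij;\mathfrak{b}}])=0$ for all $x\in\mathfrak{m}$; equivalently $t^{(r)}_{ij;\mathfrak{b}}\in\mathcal{W}_\pi$.
   Context: Let $m,n,\ell$ be non-negative integers and $\mathfrak{b}=(\mathfrak{b}_1,\dots,\mathfrak{b}_{m+n})$ a sequence with $m$ entries $\delta$ and $n$ entries $\epsilon$; put $|i|=\bar0$ if $\mathfrak{b}_i=\delta$, $|i|=\bar1$ if $\mathfrak{b}_i=\epsilon$. Let $\pi$ be a rectangular array of boxes with $m+n$ rows (numbered top to bottom) and $\ell$ columns (numbered left to right); row $i$ has parity $|i|$. For a box $a$ write $\mathrm{row}(a)$, $\mathrm{col}(a)$, $|a|:=|\mathrm{row}(a)|$. Let $V=\mathbb{C}^{M|N}$ ($M=m\ell$, $N=n\ell$) have homogeneous basis $\{v_a\}$ indexed by the boxes, $v_a$ of parity $|a|$; $\mathfrak{g}=\mathfrak{gl}_{M|N}=\mathrm{End}(V)$ with matrix units $e_{a,b}$ of parity $|a|+|b|$; brackets are supercommutators. Let $e=\sum e_{a,b}$ over pairs of boxes in the same row with $\mathrm{col}(b)=\mathrm{col}(a)+1$; $\chi(y)=\mathrm{str}(ye)$. Let $\mathfrak{p}=\mathrm{span}\{e_{a,b}:\mathrm{col}(a)\le\mathrm{col}(b)\}$,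 $\mathfrak{m}=\mathrm{span}\{e_{a,b}:\mathrm{col}(a)>\mathrm{col}(b)\}$, $I_\chi$ the left ideal of $U(\mathfrak{g})$ generated by $\{y-\chi(y):y\in\mathfrak{m}\}$; $U(\mathfrak{g})=U(\mathfrak{p})\oplus I_\chi$ and $\mathrm{pr}_\chi:U(\mathfrak{g})\to U(\mathfrak{p})$ is the projection; $\mathcal{W}_\pi=\{y\in U(\mathfrak{p}):\mathrm{pr}_\chi([x,y])=0\ \forall x\in\mathfrak{m}\}$. For $1\le c\le\ell$, $\rho_c=-(\ell-c)(m-n)$; $\tilde e_{a,b}=(-1)^{\mathrm{col}(b)-\mathrm{col}(a)}(e_{a,b}+\delta_{ab}(-1)^{|a|}\rho_{\mathrm{col}(a)})$. Set $t^{(0)}_{ij;\mathfrak{b}}=\delta_{ij}$ and for $1\le r\le\ell$, $t^{(r)}_{ij;\mathfrak{b}}=\sum_{s=1}^r\sum(-1)^{|a_1|+\cdots+|a_s|}\tilde e_{a_1,b_1}\cdots\tilde e_{a_s,b_s}$, the inner sum over boxes $a_1,\dots,a_s,b_1,\dots,b_s$ with $\sum_t(\mathrm{col}(b_t)-\mathrm{col}(a_t)+1)=r$; $\mathrm{col}(a_t)\le\mathrm{col}(b_t)$ for all $t$; $\mathrm{col}(b_t)<\mathrm{col}(a_{t+1})$ and $\mathrm{row}(b_t)=\mathrm{row}(a_{t+1})$ for $t<s$; $\mathrm{row}(a_1)=i$, $\mathrm{row}(b_s)=j$. *)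

theory Defs
  imports Complex_Main
begin

text \<open>The parity sequence is a predicate par on rows: par i = True iff b_i = epsilon (odd).
  The matrix unit e_{a,b} is indexed by the generator (a,b).\<close>

type_synonym box = "nat \<times> nat"
type_synonym gen = "box \<times> box"

definition row :: "box \<Rightarrow> nat" where "row a = fst a"
definition col :: "box \<Rightarrow> nat" where "col a = snd a"

definition boxes :: "nat \<Rightarrow> nat \<Rightarrow> nat \<Rightarrow> box set" where
  "boxes m n l = {1..m+n} \<times> {1..l}"

definition gens :: "nat \<Rightarrow> nat \<Rightarrow> nat \<Rightarrow> gen set" where
  "gens m n l = boxes m n l \<times> boxes m n l"

definition bpar :: "(nat \<Rightarrow> bool) \<Rightarrow> box \<Rightarrow> bool" where
  "bpar par a = par (row a)"

definition gpar :: "(nat \<Rightarrow> bool) \<Rightarrow> gen \<Rightarrow> bool" where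
  "gpar par g = (bpar par (fst g) \<noteq> bpar par (snd g))"

definition sgn1 :: "bool \<Rightarrow> complex" where
  "sgn1 p = (if p then -1 else 1)"

definition sgn2 :: "bool \<Rightarrow> bool \<Rightarrow> complex" where
  "sgn2 p q = (if p \<and> q then -1 else 1)"

type_synonym fa = "gen list \<Rightarrow> complex"

definition FA :: "nat \<Rightarrow> nat \<Rightarrow> nat \<Rightarrow> fa set" where
  "FA m n l = {f. finite {w. f w \<noteq> 0} \<and> (\<forall>w. f w \<noteq> 0 \<longrightarrow> set w \<subseteq> gens m n l)}"

definition fa_zero :: fa where "fa_zero = (\<lambda>w. 0)"
definition fa_one :: fa where "fa_one = (\<lambda>w. if w = [] then 1 else 0)"
definition fa_gen :: "gen \<Rightarrow> fa" where "fa_gen g = (\<lambda>w. if w = [g] then 1 else 0)"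
definition fa_add :: "fa \<Rightarrow> fa \<Rightarrow> fa" where "fa_add f g = (\<lambda>w. f w + g w)"
definition fa_scale :: "complex \<Rightarrow> fa \<Rightarrow> fa" where "fa_scale c f = (\<lambda>w. c * f w)"
definition fa_diff :: "fa \<Rightarrow> fa \<Rightarrow> fa" where "fa_diff f g = (\<lambda>w. f w - g w)"
definition fa_mult :: "fa \<Rightarrow> fa \<Rightarrow> fa" where
  "fa_mult f g = (\<lambda>w. \<Sum>k\<le>length w. f (take k w) * g (drop k w))"
definition fa_prod :: "fa list \<Rightarrow> fa" where
  "fa_prod xs = foldr fa_mult xs fa_one"
definition fa_sum :: "'i set \<Rightarrow> ('i \<Rightarrow> fa) \<Rightarrow> fa" where
  "fa_sum S F = (\<lambda>w. \<Sum>s\<in>S. F s w)"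

definition fa_sbr :: "bool \<Rightarrow> bool \<Rightarrow> fa \<Rightarrow> fa \<Rightarrow> fa" where
  "fa_sbr p q x y = fa_diff (fa_mult x y) (fa_scale (sgn2 p q) (fa_mult y x))"

definition gl_br :: "(nat \<Rightarrow> bool) \<Rightarrow> gen \<Rightarrow> gen \<Rightarrow> fa" where
  "gl_br par g1 g2 =
     fa_diff (if snd g1 = fst g2 then fa_gen (fst g1, snd g2) else fa_zero)
             (fa_scale (sgn2 (gpar par g1) (gpar par g2))
                (if snd g2 = fst g1 then fa_gen (fst g2, snd g1) else fa_zero))"

definition Urel :: "(nat \<Rightarrow> bool) \<Rightarrow> gen \<Rightarrow> gen \<Rightarrow> fa" where
  "Urel par g1 g2 = fa_diff (fa_sbr (gpar par g1) (gpar par g2) (fa_gen g1) (fa_gen g2)) (gl_br par g1 g2)"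

text \<open>Two-sided ideal J of the free algebra with U(g) = FA / J.\<close>
inductive_set Jideal :: "nat \<Rightarrow> nat \<Rightarrow> nat \<Rightarrow> (nat \<Rightarrow> bool) \<Rightarrow> fa set"
  for m n l par where
  J_rel: "g1 \<in> gens m n l \<Longrightarrow> g2 \<in> gens m n l \<Longrightarrow> Urel par g1 g2 \<in> Jideal m n l par"
| J_zero: "fa_zero \<in> Jideal m n l par"
| J_add: "x \<in> Jideal m n l par \<Longrightarrow> y \<in> Jideal m n l par \<Longrightarrow> fa_add x y \<in> Jideal m n l par"
| J_scale: "x \<in> Jideal m n l par \<Longrightarrow> fa_scale c x \<in> Jideal m n l par"
| J_left: "x \<in> Jideal m n l par \<Longrightarrow> u \<in> FA m n l \<Longrightarrow> fa_mult u x \<in> Jideal m n l par"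
| J_right: "x \<in> Jideal m n l par \<Longrightarrow> u \<in> FA m n l \<Longrightarrow> fa_mult x u \<in> Jideal m n l par"

type_synonym mat = "box \<Rightarrow> box \<Rightarrow> complex"

definition munit :: "gen \<Rightarrow> mat" where
  "munit g = (\<lambda>a b. if (a, b) = g then 1 else 0)"

definition mmult :: "box set \<Rightarrow> mat \<Rightarrow> mat \<Rightarrow> mat" where
  "mmult B X Y = (\<lambda>a c. \<Sum>b\<in>B. X a b * Y b c)"

definition str :: "(nat \<Rightarrow> bool) \<Rightarrow> box set \<Rightarrow> mat \<Rightarrow> complex" where
  "str par B X = (\<Sum>a\<in>B. sgn1 (bpar par a) * X a a)"

definition emat :: "nat \<Rightarrow> nat \<Rightarrow> nat \<Rightarrow> mat" where
  "emat m n l = (\<lambda>a b. if a \<in> boxes m n l \<and> b \<in> boxes m n l \<and> row a = row b \<and> col b = col a + 1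
                        then 1 else 0)"

definition chi :: "nat \<Rightarrow> nat \<Rightarrow> nat \<Rightarrow> (nat \<Rightarrow> bool) \<Rightarrow> gen \<Rightarrow> complex" where
  "chi m n l par g = str par (boxes m n l) (mmult (boxes m n l) (munit g) (emat m n l))"

definition mgens :: "nat \<Rightarrow> nat \<Rightarrow> nat \<Rightarrow> gen set" where
  "mgens m n l = {g \<in> gens m n l. col (fst g) > col (snd g)}"

text \<open>Preimage in the free algebra of the left ideal I_chi of U(g) generated by y - chi(y), y in m.
  An element u of U(g) satisfies pr_chi(u) = 0 iff u lies in I_chi.\<close>
inductive_set Ichi :: "nat \<Rightarrow> nat \<Rightarrow> nat \<Rightarrow> (nat \<Rightarrow> bool) \<Rightarrow> fa set"
  for m n l par where
  I_J: "x \<in> Jideal m n l par \<Longrightarrow> x \<in> Ichi m n l par"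
| I_gen: "g \<in> mgens m n l \<Longrightarrow> u \<in> FA m n l \<Longrightarrow>
     fa_mult u (fa_diff (fa_gen g) (fa_scale (chi m n l par g) fa_one)) \<in> Ichi m n l par"
| I_add: "x \<in> Ichi m n l par \<Longrightarrow> y \<in> Ichi m n l par \<Longrightarrow> fa_add x y \<in> Ichi m n l par"
| I_scale: "x \<in> Ichi m n l par \<Longrightarrow> fa_scale c x \<in> Ichi m n l par"
| I_left: "x \<in> Ichi m n l par \<Longrightarrow> u \<in> FA m n l \<Longrightarrow> fa_mult u x \<in> Ichi m n l par"

text \<open>Preimage of U(p): elements of FA supported on words in generators of p (col a <= col b),
  modulo J.\<close>
definition pgens :: "nat \<Rightarrow> nat \<Rightarrow> nat \<Rightarrow> gen set" where
  "pgens m n l = {g \<in> gens m n l. col (fst g) \<le> col (snd g)}"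

definition Up :: "nat \<Rightarrow> nat \<Rightarrow> nat \<Rightarrow> (nat \<Rightarrow> bool) \<Rightarrow> fa set" where
  "Up m n l par = {fa_add u j | u j. u \<in> FA m n l \<and> (\<forall>w. u w \<noteq> 0 \<longrightarrow> set w \<subseteq> pgens m n l)
                                   \<and> j \<in> Jideal m n l par}"

text \<open>The supercommutator [x, y] for x = sum of c(g) e_g over g in m and y homogeneous of parity q.\<close>
definition br_m :: "nat \<Rightarrow> nat \<Rightarrow> nat \<Rightarrow> (nat \<Rightarrow> bool) \<Rightarrow> (gen \<Rightarrow> complex) \<Rightarrow> bool \<Rightarrow> fa \<Rightarrow> fa" where
  "br_m m n l par c q y = fa_sum (mgens m n l) (\<lambda>g. fa_scale (c g) (fa_sbr (gpar par g) q (fa_gen g) y))"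

definition rho :: "nat \<Rightarrow> nat \<Rightarrow> nat \<Rightarrow> nat \<Rightarrow> int" where
  "rho m n l c = - (int l - int c) * (int m - int n)"

definition etilde :: "nat \<Rightarrow> nat \<Rightarrow> nat \<Rightarrow> (nat \<Rightarrow> bool) \<Rightarrow> gen \<Rightarrow> fa" where
  "etilde m n l par g =
     fa_scale ((-1) ^ nat \<bar>int (col (snd g)) - int (col (fst g))\<bar>)
       (fa_add (fa_gen g)
         (fa_scale (if fst g = snd g then sgn1 (bpar par (fst g)) * of_int (rho m n l (col (fst g))) else 0)
            fa_one))"

definition tseqs :: "nat \<Rightarrow> nat \<Rightarrow> nat \<Rightarrow> nat \<Rightarrow> nat \<Rightarrow> nat \<Rightarrow> nat \<Rightarrow> gen list set" where
  "tseqs m n l r i j s = {ps. length ps = s \<and> set ps \<subseteq> gens m n l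
      \<and> (\<forall>k<s. col (fst (ps!k)) \<le> col (snd (ps!k)))
      \<and> (\<Sum>k<s. col (snd (ps!k)) - col (fst (ps!k)) + 1) = r
      \<and> (\<forall>k. k + 1 < s \<longrightarrow> col (snd (ps!k)) < col (fst (ps!(k+1)))
                          \<and> row (snd (ps!k)) = row (fst (ps!(k+1))))
      \<and> (0 < s \<longrightarrow> row (fst (ps!0)) = i \<and> row (snd (ps!(s-1))) = j)}"

definition tterm :: "nat \<Rightarrow> nat \<Rightarrow> nat \<Rightarrow> (nat \<Rightarrow> bool) \<Rightarrow> gen list \<Rightarrow> fa" where
  "tterm m n l par ps = fa_scale (\<Prod>g\<leftarrow>ps. sgn1 (bpar par (fst g))) (fa_prod (map (etilde m n l par) ps))"

definition tT :: "nat \<Rightarrow> nat \<Rightarrow> nat \<Rightarrow> (nat \<Rightarrow> bool) \<Rightarrow> nat \<Rightarrow> nat \<Rightarrow> nat \<Rightarrow> fa" where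
  "tT m n l par r i j = (if r = 0 then (if i = j then fa_one else fa_zero)
     else fa_sum {1..r} (\<lambda>s. fa_sum (tseqs m n l r i j s) (tterm m n l par)))"

end

theory Submission
  imports Defs
begin

definition splits :: "'a list \<Rightarrow> ('a list \<times> 'a list) set" where
  "splits w = {(u,v). u @ v = w}"

lemma splits_eq: "splits w = (\<lambda>k. (take k w, drop k w)) ` {..length w}"
proof
  show "splits w \<subseteq> (\<lambda>k. (take k w, drop k w)) ` {..length w}"
  proof
    fix p assume "p \<in> splits w"
    then obtain u v where p: "p = (u,v)" "u @ v = w" unfolding splits_def by auto
    then have "p = (\<lambda>k. (take k w, drop k w)) (length u)" by auto
    moreover have "length u \<in> {..length w}" using p by auto
    ultimately show "p \<in> (\<lambda>k. (take k w, drop k w)) ` {..length w}" by blast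
  qed
  show "(\<lambda>k. (take k w, drop k w)) ` {..length w} \<subseteq> splits w"
    unfolding splits_def by auto
qed

lemma finite_splits[simp]: "finite (splits w)"
  by (simp add: splits_eq)

lemma fa_mult_split: "fa_mult f g w = (\<Sum>(u,v)\<in>splits w. f u * g v)"
proof -
  have "inj_on (\<lambda>k. (take k w, drop k w)) {..length w}"
    by (rule inj_onI) (metis (no_types, lifting) Pair_inject atMost_iff length_take min.absorb2)
  then show ?thesis unfolding fa_mult_def splits_eq
    by (simp add: sum.reindex)
qed

definition splits3 :: "'a list \<Rightarrow> ('a list \<times> 'a list \<times> 'a list) set" where
  "splits3 w = {(u,v,z). u @ v @ z = w}"

lemma finite_splits3: "finite (splits3 w)"
proof -
  have "splits3 w \<subseteq> (\<lambda>((u,y),(v,z)). (u,v,z)) ` (SIGMA p:splits w. splits (snd p))"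
    unfolding splits3_def splits_def by (auto simp: image_iff)
  moreover have "finite (SIGMA p:splits w. splits (snd p))" by auto
  ultimately show ?thesis by (meson finite_imageI finite_subset)
qed

lemma fa_mult_assoc: "fa_mult (fa_mult f g) h = fa_mult f (fa_mult g h)"
proof
  fix w
  have "fa_mult (fa_mult f g) h w = (\<Sum>(x,z)\<in>splits w. (\<Sum>(u,v)\<in>splits x. f u * g v) * h z)"
    by (simp add: fa_mult_split)
  also have "\<dots> = (\<Sum>(x,z)\<in>splits w. (\<Sum>(u,v)\<in>splits x. f u * g v * h z))"
    by (simp add: sum_distrib_right case_prod_unfold)
  also have "\<dots> = (\<Sum>((x,z),(u,v))\<in>(SIGMA p:splits w. splits (fst p)). f u * g v * h z)"
    using sum.Sigma[of "splits w" "\<lambda>p. splits (fst p)" "\<lambda>p q. f (fst q) * g (snd q) * h (snd p)"]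
    by (simp add: case_prod_unfold)
  also have "\<dots> = (\<Sum>(u,v,z)\<in>splits3 w. f u * g v * h z)"
    by (rule sum.reindex_bij_witness[where i="\<lambda>(u,v,z). ((u@v,z),(u,v))" and j="\<lambda>((x,z),(u,v)). (u,v,z)"])
       (auto simp: splits_def splits3_def)
  also have "\<dots> = (\<Sum>((u,y),(v,z))\<in>(SIGMA p:splits w. splits (snd p)). f u * g v * h z)"
    by (rule sum.reindex_bij_witness[where j="\<lambda>(u,v,z). ((u,v@z),(v,z))" and i="\<lambda>((u,y),(v,z)). (u,v,z)"])
       (auto simp: splits_def splits3_def)
  also have "\<dots> = (\<Sum>(u,y)\<in>splits w. (\<Sum>(v,z)\<in>splits y. f u * g v * h z))"
    using sum.Sigma[of "splits w" "\<lambda>p. splits (snd p)" "\<lambda>p q. f (fst p) * g (fst q) * h (snd q)"]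
    by (simp add: case_prod_unfold)
  also have "\<dots> = (\<Sum>(u,y)\<in>splits w. f u * (\<Sum>(v,z)\<in>splits y. g v * h z))"
    by (simp add: sum_distrib_left case_prod_unfold mult.assoc)
  also have "\<dots> = fa_mult f (fa_mult g h) w"
    by (simp add: fa_mult_split)
  finally show "fa_mult (fa_mult f g) h w = fa_mult f (fa_mult g h) w" .
qed

lemma fa_mult_one_left[simp]: "fa_mult fa_one f = f"
proof
  fix w show "fa_mult fa_one f w = f w"
  proof -
    have "fa_mult fa_one f w = (\<Sum>k\<in>{..length w}. if k = 0 then f w else 0)"
      unfolding fa_mult_def fa_one_def by (rule sum.cong) auto
    thus ?thesis by simp
  qed
qed

lemma fa_mult_one_right[simp]: "fa_mult f fa_one = f"
proof
  fix w
  have "fa_mult f fa_one w = (\<Sum>k\<in>{..length w}. if k = length w then f w else 0)"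
    unfolding fa_mult_def fa_one_def by (rule sum.cong) auto
  thus "fa_mult f fa_one w = f w" by simp
qed

lemma fa_mult_add_left: "fa_mult (fa_add f g) h = fa_add (fa_mult f h) (fa_mult g h)"
  by (rule ext) (simp add: fa_mult_def fa_add_def distrib_right sum.distrib)
lemma fa_mult_add_right: "fa_mult h (fa_add f g) = fa_add (fa_mult h f) (fa_mult h g)"
  by (rule ext) (simp add: fa_mult_def fa_add_def distrib_left sum.distrib)
lemma fa_mult_diff_left: "fa_mult (fa_diff f g) h = fa_diff (fa_mult f h) (fa_mult g h)"
  by (rule ext) (simp add: fa_mult_def fa_diff_def left_diff_distrib sum_subtractf)
lemma fa_mult_diff_right: "fa_mult h (fa_diff f g) = fa_diff (fa_mult h f) (fa_mult h g)"
  by (rule ext) (simp add: fa_mult_def fa_diff_def right_diff_distrib sum_subtractf)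
lemma fa_mult_scale_left: "fa_mult (fa_scale c f) h = fa_scale c (fa_mult f h)"
  by (rule ext) (simp add: fa_mult_def fa_scale_def sum_distrib_left mult.assoc)
lemma fa_mult_scale_right: "fa_mult h (fa_scale c f) = fa_scale c (fa_mult h f)"
  by (rule ext) (simp add: fa_mult_def fa_scale_def sum_distrib_left mult.left_commute)
lemma fa_mult_zero_left[simp]: "fa_mult fa_zero h = fa_zero"
  by (rule ext) (simp add: fa_mult_def fa_zero_def)
lemma fa_mult_zero_right[simp]: "fa_mult h fa_zero = fa_zero"
  by (rule ext) (simp add: fa_mult_def fa_zero_def)
lemma fa_mult_sum_left: "finite S \<Longrightarrow> fa_mult (fa_sum S F) h = fa_sum S (\<lambda>s. fa_mult (F s) h)"
  by (rule ext) (simp add: fa_mult_def fa_sum_def sum_distrib_right sum.swap[of _ S])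
lemma fa_mult_sum_right: "finite S \<Longrightarrow> fa_mult h (fa_sum S F) = fa_sum S (\<lambda>s. fa_mult h (F s))"
  by (rule ext) (simp add: fa_mult_def fa_sum_def sum_distrib_left sum.swap[of _ S])

definition supp_in :: "gen set \<Rightarrow> fa \<Rightarrow> bool" where
  "supp_in S f = (\<forall>w. f w \<noteq> 0 \<longrightarrow> set w \<subseteq> S)"

lemma fa_mult_nz: "fa_mult f g w \<noteq> 0 \<Longrightarrow> \<exists>u v. w = u @ v \<and> f u \<noteq> 0 \<and> g v \<noteq> 0"
proof (rule ccontr)
  assume a: "fa_mult f g w \<noteq> 0" "\<not> (\<exists>u v. w = u @ v \<and> f u \<noteq> 0 \<and> g v \<noteq> 0)"
  have "fa_mult f g w = (\<Sum>(u,v)\<in>splits w. f u * g v)" by (rule fa_mult_split)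
  also have "\<dots> = 0" by (rule sum.neutral) (use a(2) in \<open>auto simp: splits_def\<close>)
  finally show False using a(1) by simp
qed

lemma supp_mult: "supp_in S f \<Longrightarrow> supp_in S g \<Longrightarrow> supp_in S (fa_mult f g)"
  unfolding supp_in_def by (metis Un_subset_iff fa_mult_nz set_append)
lemma supp_add: "supp_in S f \<Longrightarrow> supp_in S g \<Longrightarrow> supp_in S (fa_add f g)"
  unfolding supp_in_def fa_add_def by (metis add.right_neutral add_0)
lemma supp_diff: "supp_in S f \<Longrightarrow> supp_in S g \<Longrightarrow> supp_in S (fa_diff f g)"
  unfolding supp_in_def fa_diff_def by (metis diff_zero diff_self)
lemma supp_scale: "supp_in S f \<Longrightarrow> supp_in S (fa_scale c f)"
  unfolding supp_in_def fa_scale_def by fastforce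
lemma supp_zero: "supp_in S fa_zero" unfolding supp_in_def fa_zero_def by simp
lemma supp_one: "supp_in S fa_one" unfolding supp_in_def fa_one_def by simp
lemma supp_gen: "g \<in> S \<Longrightarrow> supp_in S (fa_gen g)" unfolding supp_in_def fa_gen_def by simp
lemma supp_sum: "(\<And>s. s \<in> T \<Longrightarrow> supp_in S (F s)) \<Longrightarrow> supp_in S (fa_sum T F)"
proof -
  assume h: "\<And>s. s \<in> T \<Longrightarrow> supp_in S (F s)"
  show ?thesis unfolding supp_in_def fa_sum_def
  proof (intro allI impI)
    fix w assume "(\<Sum>s\<in>T. F s w) \<noteq> 0"
    then obtain s where "s \<in> T" "F s w \<noteq> 0" by (meson sum.neutral)
    thus "set w \<subseteq> S" using h unfolding supp_in_def by blast
  qed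
qed
lemma supp_mono: "supp_in S f \<Longrightarrow> S \<subseteq> S' \<Longrightarrow> supp_in S' f"
  unfolding supp_in_def by blast

definition finsupp :: "fa \<Rightarrow> bool" where "finsupp f = finite {w. f w \<noteq> 0}"

lemma finsupp_mult: "finsupp f \<Longrightarrow> finsupp g \<Longrightarrow> finsupp (fa_mult f g)"
proof -
  assume "finsupp f" "finsupp g"
  then have "finite ((\<lambda>(u,v). u @ v) ` ({w. f w \<noteq> 0} \<times> {w. g w \<noteq> 0}))"
    unfolding finsupp_def by auto
  moreover have "{w. fa_mult f g w \<noteq> 0} \<subseteq> (\<lambda>(u,v). u @ v) ` ({w. f w \<noteq> 0} \<times> {w. g w \<noteq> 0})"
    using fa_mult_nz by fastforce
  ultimately show ?thesis unfolding finsupp_def by (rule finite_subset[rotated])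
qed
lemma finsupp_add: "finsupp f \<Longrightarrow> finsupp g \<Longrightarrow> finsupp (fa_add f g)"
  unfolding finsupp_def fa_add_def by (rule finite_subset[of _ "{w. f w \<noteq> 0} \<union> {w. g w \<noteq> 0}"]) auto
lemma finsupp_diff: "finsupp f \<Longrightarrow> finsupp g \<Longrightarrow> finsupp (fa_diff f g)"
  unfolding finsupp_def fa_diff_def by (rule finite_subset[of _ "{w. f w \<noteq> 0} \<union> {w. g w \<noteq> 0}"]) auto
lemma finsupp_scale: "finsupp f \<Longrightarrow> finsupp (fa_scale c f)"
  unfolding finsupp_def fa_scale_def by (rule finite_subset[of _ "{w. f w \<noteq> 0}"]) auto
lemma finsupp_zero: "finsupp fa_zero" unfolding finsupp_def fa_zero_def by simp
lemma finsupp_one: "finsupp fa_one" unfolding finsupp_def fa_one_def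
  by (rule finite_subset[of _ "{[]}"]) auto
lemma finsupp_gen: "finsupp (fa_gen g)" unfolding finsupp_def fa_gen_def
  by (rule finite_subset[of _ "{[g]}"]) auto
lemma finsupp_sum: "finite T \<Longrightarrow> (\<And>s. s \<in> T \<Longrightarrow> finsupp (F s)) \<Longrightarrow> finsupp (fa_sum T F)"
proof -
  assume T: "finite T" and h: "\<And>s. s \<in> T \<Longrightarrow> finsupp (F s)"
  have "{w. fa_sum T F w \<noteq> 0} \<subseteq> (\<Union>s\<in>T. {w. F s w \<noteq> 0})"
    unfolding fa_sum_def by (auto intro: sum.neutral)
  moreover have "finite (\<Union>s\<in>T. {w. F s w \<noteq> 0})" using T h unfolding finsupp_def by auto
  ultimately show ?thesis unfolding finsupp_def by (rule finite_subset)
qed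

lemma FA_iff: "f \<in> FA m n l \<longleftrightarrow> finsupp f \<and> supp_in (gens m n l) f"
  unfolding FA_def finsupp_def supp_in_def by auto

lemma FA_mult: "f \<in> FA m n l \<Longrightarrow> g \<in> FA m n l \<Longrightarrow> fa_mult f g \<in> FA m n l"
  by (simp add: FA_iff finsupp_mult supp_mult)
lemma FA_add: "f \<in> FA m n l \<Longrightarrow> g \<in> FA m n l \<Longrightarrow> fa_add f g \<in> FA m n l"
  by (simp add: FA_iff finsupp_add supp_add)
lemma FA_diff: "f \<in> FA m n l \<Longrightarrow> g \<in> FA m n l \<Longrightarrow> fa_diff f g \<in> FA m n l"
  by (simp add: FA_iff finsupp_diff supp_diff)
lemma FA_scale: "f \<in> FA m n l \<Longrightarrow> fa_scale c f \<in> FA m n l"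
  by (simp add: FA_iff finsupp_scale supp_scale)
lemma FA_zero: "fa_zero \<in> FA m n l" by (simp add: FA_iff finsupp_zero supp_zero)
lemma FA_one: "fa_one \<in> FA m n l" by (simp add: FA_iff finsupp_one supp_one)
lemma FA_gen: "g \<in> gens m n l \<Longrightarrow> fa_gen g \<in> FA m n l" by (simp add: FA_iff finsupp_gen supp_gen)
lemma FA_sum: "finite T \<Longrightarrow> (\<And>s. s \<in> T \<Longrightarrow> F s \<in> FA m n l) \<Longrightarrow> fa_sum T F \<in> FA m n l"
  by (simp add: FA_iff finsupp_sum supp_sum)

lemmas FA_closed = FA_mult FA_add FA_diff FA_scale FA_zero FA_one FA_gen FA_sum

lemma fa_add_comm: "fa_add f g = fa_add g f" by (rule ext) (simp add: fa_add_def)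
lemma fa_add_zero[simp]: "fa_add f fa_zero = f" "fa_add fa_zero f = f"
  by (rule ext, simp add: fa_add_def fa_zero_def)+
lemma fa_scale_zero[simp]: "fa_scale c fa_zero = fa_zero" "fa_scale 0 f = fa_zero" "fa_scale 1 f = f"
  by (rule ext, simp add: fa_scale_def fa_zero_def)+
lemma fa_scale_scale[simp]: "fa_scale c (fa_scale d f) = fa_scale (c*d) f"
  by (rule ext) (simp add: fa_scale_def)
lemma fa_diff_self[simp]: "fa_diff f f = fa_zero" by (rule ext) (simp add: fa_diff_def fa_zero_def)
lemma fa_diff_as_add: "fa_diff f g = fa_add f (fa_scale (-1) g)"
  by (rule ext) (simp add: fa_diff_def fa_add_def fa_scale_def)

section \<open>Congruences modulo J and modulo I_chi\<close>

definition jeq :: "nat \<Rightarrow> nat \<Rightarrow> nat \<Rightarrow> (nat \<Rightarrow> bool) \<Rightarrow> fa \<Rightarrow> fa \<Rightarrow> bool" where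
  "jeq m n l par f g = (fa_diff f g \<in> Jideal m n l par)"
definition ieq :: "nat \<Rightarrow> nat \<Rightarrow> nat \<Rightarrow> (nat \<Rightarrow> bool) \<Rightarrow> fa \<Rightarrow> fa \<Rightarrow> bool" where
  "ieq m n l par f g = (fa_diff f g \<in> Ichi m n l par)"

lemma J_diff: "x \<in> Jideal m n l par \<Longrightarrow> y \<in> Jideal m n l par \<Longrightarrow> fa_diff x y \<in> Jideal m n l par"
  unfolding fa_diff_as_add by (intro J_add J_scale)
lemma I_diff: "x \<in> Ichi m n l par \<Longrightarrow> y \<in> Ichi m n l par \<Longrightarrow> fa_diff x y \<in> Ichi m n l par"
  unfolding fa_diff_as_add by (intro I_add I_scale)

lemma jeq_refl: "jeq m n l par f f" unfolding jeq_def by (simp add: J_zero)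
lemma ieq_refl: "ieq m n l par f f" unfolding ieq_def by (simp add: I_J J_zero)

lemma diff_trans_eq: "fa_diff f h = fa_add (fa_diff f g) (fa_diff g h)"
  by (rule ext) (simp add: fa_diff_def fa_add_def)
lemma diff_sym_eq: "fa_diff g f = fa_scale (-1) (fa_diff f g)"
  by (rule ext) (simp add: fa_diff_def fa_scale_def)

lemma jeq_trans: "jeq m n l par f g \<Longrightarrow> jeq m n l par g h \<Longrightarrow> jeq m n l par f h"
  unfolding jeq_def by (subst diff_trans_eq) (rule J_add)
lemma ieq_trans: "ieq m n l par f g \<Longrightarrow> ieq m n l par g h \<Longrightarrow> ieq m n l par f h"
  unfolding ieq_def by (subst diff_trans_eq) (rule I_add)
lemma jeq_sym: "jeq m n l par f g \<Longrightarrow> jeq m n l par g f"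
  unfolding jeq_def by (subst diff_sym_eq) (rule J_scale)
lemma ieq_sym: "ieq m n l par f g \<Longrightarrow> ieq m n l par g f"
  unfolding ieq_def by (subst diff_sym_eq) (rule I_scale)
lemma jeq_ieq: "jeq m n l par f g \<Longrightarrow> ieq m n l par f g"
  unfolding jeq_def ieq_def by (rule I_J)

lemma diff_add_eq: "fa_diff (fa_add f1 f2) (fa_add g1 g2) = fa_add (fa_diff f1 g1) (fa_diff f2 g2)"
  by (rule ext) (simp add: fa_diff_def fa_add_def)
lemma diff_scale_eq: "fa_diff (fa_scale c f) (fa_scale c g) = fa_scale c (fa_diff f g)"
  by (rule ext) (simp add: fa_diff_def fa_scale_def algebra_simps)

lemma jeq_add: "jeq m n l par f1 g1 \<Longrightarrow> jeq m n l par f2 g2 \<Longrightarrow> jeq m n l par (fa_add f1 f2) (fa_add g1 g2)"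
  unfolding jeq_def diff_add_eq by (rule J_add)
lemma ieq_add: "ieq m n l par f1 g1 \<Longrightarrow> ieq m n l par f2 g2 \<Longrightarrow> ieq m n l par (fa_add f1 f2) (fa_add g1 g2)"
  unfolding ieq_def diff_add_eq by (rule I_add)
lemma jeq_scale: "jeq m n l par f g \<Longrightarrow> jeq m n l par (fa_scale c f) (fa_scale c g)"
  unfolding jeq_def diff_scale_eq by (rule J_scale)
lemma ieq_scale: "ieq m n l par f g \<Longrightarrow> ieq m n l par (fa_scale c f) (fa_scale c g)"
  unfolding ieq_def diff_scale_eq by (rule I_scale)
lemma jeq_left: "jeq m n l par f g \<Longrightarrow> u \<in> FA m n l \<Longrightarrow> jeq m n l par (fa_mult u f) (fa_mult u g)"
  unfolding jeq_def fa_mult_diff_right[symmetric] by (rule J_left)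
lemma jeq_right: "jeq m n l par f g \<Longrightarrow> u \<in> FA m n l \<Longrightarrow> jeq m n l par (fa_mult f u) (fa_mult g u)"
  unfolding jeq_def fa_mult_diff_left[symmetric] by (rule J_right)
lemma ieq_left: "ieq m n l par f g \<Longrightarrow> u \<in> FA m n l \<Longrightarrow> ieq m n l par (fa_mult u f) (fa_mult u g)"
  unfolding ieq_def fa_mult_diff_right[symmetric] by (rule I_left)

lemma fa_sum_diff: "fa_diff (fa_sum T F) (fa_sum T G) = fa_sum T (\<lambda>s. fa_diff (F s) (G s))"
  by (rule ext) (simp add: fa_diff_def fa_sum_def sum_subtractf)

lemma J_sum: "finite T \<Longrightarrow> (\<And>s. s \<in> T \<Longrightarrow> F s \<in> Jideal m n l par) \<Longrightarrow> fa_sum T F \<in> Jideal m n l par"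
proof (induction T rule: finite_induct)
  case empty
  have "fa_sum {} F = fa_zero" by (rule ext) (simp add: fa_sum_def fa_zero_def)
  then show ?case by (simp add: J_zero)
next
  case (insert x T)
  have "fa_sum (insert x T) F = fa_add (F x) (fa_sum T F)"
    by (rule ext) (simp add: fa_sum_def fa_add_def insert.hyps)
  then show ?case using insert by (simp add: J_add)
qed
lemma I_sum: "finite T \<Longrightarrow> (\<And>s. s \<in> T \<Longrightarrow> F s \<in> Ichi m n l par) \<Longrightarrow> fa_sum T F \<in> Ichi m n l par"
proof (induction T rule: finite_induct)
  case empty
  have "fa_sum {} F = fa_zero" by (rule ext) (simp add: fa_sum_def fa_zero_def)
  then show ?case by (simp add: I_J J_zero)
next
  case (insert x T)
  have "fa_sum (insert x T) F = fa_add (F x) (fa_sum T F)"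
    by (rule ext) (simp add: fa_sum_def fa_add_def insert.hyps)
  then show ?case using insert by (simp add: I_add)
qed
lemma jeq_sum: "finite T \<Longrightarrow> (\<And>s. s \<in> T \<Longrightarrow> jeq m n l par (F s) (G s)) \<Longrightarrow> jeq m n l par (fa_sum T F) (fa_sum T G)"
  unfolding jeq_def fa_sum_diff by (rule J_sum)
lemma ieq_sum: "finite T \<Longrightarrow> (\<And>s. s \<in> T \<Longrightarrow> ieq m n l par (F s) (G s)) \<Longrightarrow> ieq m n l par (fa_sum T F) (fa_sum T G)"
  unfolding ieq_def fa_sum_diff by (rule I_sum)
lemma ieq_eq: "f = g \<Longrightarrow> ieq m n l par f g" by (simp add: ieq_refl)
lemma jeq_eq: "f = g \<Longrightarrow> jeq m n l par f g" by (simp add: jeq_refl)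

definition sc :: "gen \<Rightarrow> complex" where
  "sc g = (-1) ^ nat \<bar>int (col (snd g)) - int (col (fst g))\<bar>"

lemma sc_sq[simp]: "sc g * sc g = 1"
  unfolding sc_def by (simp add: power_mult_distrib[symmetric])

lemma jeq_trans1[trans]: "f = g \<Longrightarrow> jeq m n l par g h \<Longrightarrow> jeq m n l par f h" by simp
lemma jeq_trans2[trans]: "jeq m n l par f g \<Longrightarrow> g = h \<Longrightarrow> jeq m n l par f h" by simp
lemma ieq_trans1[trans]: "f = g \<Longrightarrow> ieq m n l par g h \<Longrightarrow> ieq m n l par f h" by simp
lemma ieq_trans2[trans]: "ieq m n l par f g \<Longrightarrow> g = h \<Longrightarrow> ieq m n l par f h" by simp
declare jeq_trans[trans] ieq_trans[trans]

lemma fa_sum_insert: "finite S \<Longrightarrow> a \<notin> S \<Longrightarrow> fa_sum (insert a S) F = fa_add (F a) (fa_sum S F)"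
  by (rule ext) (simp add: fa_sum_def fa_add_def)
lemma fa_sum_reindex: "inj_on h S \<Longrightarrow> fa_sum (h ` S) F = fa_sum S (\<lambda>s. F (h s))"
  by (rule ext) (simp add: fa_sum_def sum.reindex)
lemma fa_scale_sum: "fa_scale c (fa_sum S F) = fa_sum S (\<lambda>s. fa_scale c (F s))"
  by (rule ext) (simp add: fa_sum_def fa_scale_def sum_distrib_left)
lemma fa_sum_cong: "(\<And>s. s \<in> S \<Longrightarrow> F s = F' s) \<Longrightarrow> fa_sum S F = fa_sum S F'"
  by (rule ext) (simp add: fa_sum_def)

locale W = fixes m n l :: nat and par :: "nat \<Rightarrow> bool"
begin

abbreviation "jq \<equiv> jeq m n l par"
abbreviation "iq \<equiv> ieq m n l par"
abbreviation "et \<equiv> etilde m n l par"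
abbreviation "G \<equiv> gens m n l"

definition E :: "gen list \<Rightarrow> fa" where "E ps = fa_prod (map et ps)"

lemma E_Nil[simp]: "E [] = fa_one" by (simp add: E_def fa_prod_def)
lemma E_Cons: "E (g # ps) = fa_mult (et g) (E ps)" by (simp add: E_def fa_prod_def)
lemma E_append: "E (xs @ ys) = fa_mult (E xs) (E ys)"
  by (induction xs) (simp_all add: E_Cons fa_mult_assoc)
lemma E_single: "E [g] = et g" by (simp add: E_Cons)

lemma et_FA: "g \<in> G \<Longrightarrow> et g \<in> FA m n l"
  unfolding etilde_def by (intro FA_closed)
lemma E_FA: "set ps \<subseteq> G \<Longrightarrow> E ps \<in> FA m n l"
  by (induction ps) (simp_all add: E_Cons FA_one FA_mult et_FA)

definition eps :: "gen \<Rightarrow> gen list \<Rightarrow> complex" where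
  "eps y ps = (\<Prod>h\<leftarrow>ps. sgn2 (gpar par y) (gpar par h))"

lemma eps_Nil[simp]: "eps y [] = 1" by (simp add: eps_def)
lemma eps_Cons: "eps y (g#ps) = sgn2 (gpar par y) (gpar par g) * eps y ps" by (simp add: eps_def)
lemma eps_append: "eps y (xs@ys) = eps y xs * eps y ys" by (simp add: eps_def)

definition Bt :: "gen \<Rightarrow> gen \<Rightarrow> fa" where
  "Bt y g = fa_scale (sc g) (gl_br par y g)"

lemma gpar_diag: "fst g = snd g \<Longrightarrow> gpar par g = False"
  by (simp add: gpar_def)

lemma step:
  assumes "y \<in> G" "g \<in> G"
  shows "jq (fa_mult (fa_gen y) (et g))
            (fa_add (fa_scale (sgn2 (gpar par y) (gpar par g)) (fa_mult (et g) (fa_gen y))) (Bt y g))"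
proof -
  define s where "s = sgn2 (gpar par y) (gpar par g)"
  define d where "d = (if fst g = snd g then sgn1 (bpar par (fst g)) * of_int (rho m n l (col (fst g))) else 0)"
  have d0: "d * (1 - s) = 0" unfolding d_def s_def by (simp add: gpar_diag sgn2_def)
  have et: "et g = fa_scale (sc g) (fa_add (fa_gen g) (fa_scale d fa_one))"
    unfolding etilde_def sc_def d_def by simp
  have eq: "fa_diff (fa_mult (fa_gen y) (et g)) (fa_add (fa_scale s (fa_mult (et g) (fa_gen y))) (Bt y g))
      = fa_scale (sc g) (Urel par y g)"
  proof -
    have A: "fa_mult (fa_gen y) (et g) = fa_scale (sc g) (fa_add (fa_mult (fa_gen y) (fa_gen g)) (fa_scale d (fa_gen y)))"
      unfolding et by (simp add: fa_mult_scale_right fa_mult_add_right)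
    have B: "fa_mult (et g) (fa_gen y) = fa_scale (sc g) (fa_add (fa_mult (fa_gen g) (fa_gen y)) (fa_scale d (fa_gen y)))"
      unfolding et by (simp add: fa_mult_scale_left fa_mult_add_left)
    show ?thesis unfolding A B Bt_def Urel_def fa_sbr_def s_def[symmetric]
    proof (rule ext)
      fix w
      have "d * (1 - s) * fa_gen y w = 0" using d0 by simp
      thus "fa_diff (fa_scale (sc g) (fa_add (fa_mult (fa_gen y) (fa_gen g)) (fa_scale d (fa_gen y))))
         (fa_add (fa_scale s (fa_scale (sc g) (fa_add (fa_mult (fa_gen g) (fa_gen y)) (fa_scale d (fa_gen y)))))
           (fa_scale (sc g) (gl_br par y g))) w =
        fa_scale (sc g) (fa_diff (fa_diff (fa_mult (fa_gen y) (fa_gen g)) (fa_scale s (fa_mult (fa_gen g) (fa_gen y)))) (gl_br par y g)) w"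
        by (simp add: fa_diff_def fa_add_def fa_scale_def algebra_simps) blast
    qed
  qed
  show ?thesis unfolding jeq_def s_def[symmetric] eq
    by (intro J_scale J_rel assms)
qed

fun Xp :: "gen \<Rightarrow> gen list \<Rightarrow> fa" where
  "Xp y [] = fa_zero"
| "Xp y (g # ps) = fa_add (fa_mult (Bt y g) (E ps))
      (fa_scale (sgn2 (gpar par y) (gpar par g)) (fa_mult (et g) (Xp y ps)))"

lemma expand:
  assumes "y \<in> G" "set ps \<subseteq> G"
  shows "jq (fa_mult (fa_gen y) (E ps)) (fa_add (Xp y ps) (fa_scale (eps y ps) (fa_mult (E ps) (fa_gen y))))"
  using assms(2)
proof (induction ps)
  case Nil
  then show ?case by (simp add: jeq_refl)
next
  case (Cons g ps)
  define s where "s = sgn2 (gpar par y) (gpar par g)"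
  have g: "g \<in> G" and ps: "set ps \<subseteq> G" using Cons.prems by auto
  have "fa_mult (fa_gen y) (E (g#ps)) = fa_mult (fa_mult (fa_gen y) (et g)) (E ps)"
    by (simp add: E_Cons fa_mult_assoc)
  also have "jq \<dots> (fa_mult (fa_add (fa_scale s (fa_mult (et g) (fa_gen y))) (Bt y g)) (E ps))"
    by (rule jeq_right[OF step[OF assms(1) g, folded s_def] E_FA[OF ps]])
  also have "\<dots> = fa_add (fa_scale s (fa_mult (et g) (fa_mult (fa_gen y) (E ps)))) (fa_mult (Bt y g) (E ps))"
    by (simp add: fa_mult_add_left fa_mult_scale_left fa_mult_assoc)
  also have "jq \<dots> (fa_add (fa_scale s (fa_mult (et g) (fa_add (Xp y ps) (fa_scale (eps y ps) (fa_mult (E ps) (fa_gen y)))))) (fa_mult (Bt y g) (E ps)))"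
    by (intro jeq_add jeq_scale jeq_left Cons.IH ps et_FA g jeq_refl)
  also have "\<dots> = fa_add (Xp y (g#ps)) (fa_scale (eps y (g#ps)) (fa_mult (E (g#ps)) (fa_gen y)))"
    by (simp add: fa_mult_add_right fa_mult_scale_right s_def eps_Cons E_Cons fa_mult_assoc)
       (rule ext, simp add: fa_add_def fa_scale_def algebra_simps)
  finally show ?case .
qed

definition splitsC :: "gen list \<Rightarrow> (gen list \<times> gen \<times> gen list) set" where
  "splitsC ps = {(pre, g, suf). pre @ g # suf = ps}"

lemma splitsC_Nil: "splitsC [] = {}" by (simp add: splitsC_def)
lemma splitsC_Cons: "splitsC (g # ps) = insert ([], g, ps) ((\<lambda>(pre,h,suf). (g#pre,h,suf)) ` splitsC ps)"
  unfolding splitsC_def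
  by (auto simp: image_iff append_eq_Cons_conv)

lemma finite_splitsC[simp]: "finite (splitsC ps)"
  by (induction ps) (simp_all add: splitsC_Nil splitsC_Cons)

lemma Xp_sum: "Xp y ps = fa_sum (splitsC ps)
   (\<lambda>(pre,g,suf). fa_scale (eps y pre) (fa_mult (E pre) (fa_mult (Bt y g) (E suf))))"
proof (induction ps)
  case Nil
  then show ?case by (rule ext) (simp add: splitsC_Nil fa_sum_def fa_zero_def)
next
  case (Cons g ps)
  have nin: "([], g, ps) \<notin> (\<lambda>(pre,h,suf). (g#pre,h,suf)) ` splitsC ps" by auto
  have inj: "inj_on (\<lambda>(pre,h,suf). (g#pre,h,suf)) (splitsC ps)" by (rule inj_onI) auto
  have "Xp y (g # ps) = fa_add (fa_mult (Bt y g) (E ps))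
      (fa_scale (sgn2 (gpar par y) (gpar par g)) (fa_mult (et g) (fa_sum (splitsC ps)
   (\<lambda>(pre,g,suf). fa_scale (eps y pre) (fa_mult (E pre) (fa_mult (Bt y g) (E suf)))))))"
    by (simp add: Cons.IH)
  also have "\<dots> = fa_sum (splitsC (g # ps))
        (\<lambda>(pre,g,suf). fa_scale (eps y pre) (fa_mult (E pre) (fa_mult (Bt y g) (E suf))))"
    unfolding splitsC_Cons
    apply (subst fa_sum_insert[OF _ nin], simp)
    apply (subst fa_sum_reindex[OF inj])
    apply (simp add: fa_mult_sum_right fa_scale_sum case_prod_unfold)
    apply (rule arg_cong[where f="fa_add _"], rule fa_sum_cong)
    apply (simp add: E_Cons eps_Cons fa_mult_scale_right fa_mult_assoc)
    done
  finally show ?case .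
qed

end

lemma finite_boxes[simp]: "finite (boxes m n l)" by (simp add: boxes_def)
lemma finite_gens[simp]: "finite (gens m n l)" by (simp add: gens_def)
lemma finite_pgens[simp]: "finite (pgens m n l)"
  by (rule finite_subset[of _ "gens m n l"]) (auto simp: pgens_def)

lemma chi_val:
  assumes "g \<in> gens m n l"
  shows "chi m n l par g = (if row (fst g) = row (snd g) \<and> col (fst g) = col (snd g) + 1
                            then sgn1 (bpar par (fst g)) else 0)"
proof -
  obtain a b where g: "g = (a,b)" by (cases g)
  have ab: "a \<in> boxes m n l" "b \<in> boxes m n l" using assms g by (auto simp: gens_def)
  have mm: "mmult (boxes m n l) (munit g) (emat m n l) a' a' = (if a' = a then emat m n l b a else 0)"
    if "a' \<in> boxes m n l" for a'
  proof -
    have "mmult (boxes m n l) (munit g) (emat m n l) a' a' =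
          (\<Sum>b'\<in>boxes m n l. if b' = b then (if a' = a then emat m n l b a' else 0) else 0)"
      unfolding mmult_def munit_def g by (rule sum.cong) auto
    also have "\<dots> = (if a' = a then emat m n l b a else 0)" using ab by simp
    finally show ?thesis .
  qed
  have "chi m n l par g = (\<Sum>a'\<in>boxes m n l. if a' = a then sgn1 (bpar par a) * emat m n l b a else 0)"
    unfolding chi_def str_def by (rule sum.cong) (auto simp: mm)
  also have "\<dots> = sgn1 (bpar par a) * emat m n l b a" using ab by simp
  finally show ?thesis using ab unfolding g emat_def by auto
qed

context W begin

abbreviation "ch \<equiv> chi m n l par"
abbreviation "MG \<equiv> mgens m n l"
abbreviation "PG \<equiv> pgens m n l"

lemma right_gen:
  assumes "y \<in> MG" "u \<in> FA m n l"
  shows "iq (fa_mult u (fa_gen y)) (fa_scale (ch y) u)"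
proof -
  have "fa_diff (fa_mult u (fa_gen y)) (fa_scale (ch y) u) =
        fa_mult u (fa_diff (fa_gen y) (fa_scale (ch y) fa_one))"
    by (simp add: fa_mult_diff_right fa_mult_scale_right)
  thus ?thesis unfolding ieq_def using I_gen[OF assms] by simp
qed

lemma gl_br_zero: "snd y \<noteq> fst h \<Longrightarrow> snd h \<noteq> fst y \<Longrightarrow> gl_br par y h = fa_zero"
  unfolding gl_br_def by (rule ext) (simp add: fa_diff_def fa_scale_def fa_zero_def)
lemma Bt_zero: "snd y \<noteq> fst h \<Longrightarrow> snd h \<noteq> fst y \<Longrightarrow> Bt y h = fa_zero"
  by (simp add: Bt_def gl_br_zero)

lemma Xp_zero: "(\<And>h. h \<in> set ps \<Longrightarrow> Bt y h = fa_zero) \<Longrightarrow> Xp y ps = fa_zero"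
  by (induction ps) auto

lemma mgens_gens: "y \<in> MG \<Longrightarrow> y \<in> G" by (simp add: mgens_def)

lemma pass:
  assumes "y \<in> MG" "set ps \<subseteq> G" "\<And>h. h \<in> set ps \<Longrightarrow> Bt y h = fa_zero"
  shows "iq (fa_mult (fa_gen y) (E ps)) (fa_scale (eps y ps * ch y) (E ps))"
proof -
  have "iq (fa_mult (fa_gen y) (E ps)) (fa_add (Xp y ps) (fa_scale (eps y ps) (fa_mult (E ps) (fa_gen y))))"
    by (rule jeq_ieq, rule expand) (use assms mgens_gens in auto)
  also have "\<dots> = fa_scale (eps y ps) (fa_mult (E ps) (fa_gen y))"
    using Xp_zero[OF assms(3)] by simp
  also have "iq \<dots> (fa_scale (eps y ps) (fa_scale (ch y) (E ps)))"
    by (intro ieq_scale right_gen assms E_FA)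
  also have "\<dots> = fa_scale (eps y ps * ch y) (E ps)" by simp
  finally show ?thesis .
qed

section \<open>Valid sequences\<close>

definition link :: "gen \<Rightarrow> gen \<Rightarrow> bool" where
  "link g h = (col (snd g) < col (fst h) \<and> row (snd g) = row (fst h))"

fun chn :: "gen list \<Rightarrow> bool" where
  "chn [] = True"
| "chn [g] = True"
| "chn (g # h # ps) = (link g h \<and> chn (h # ps))"

lemma chn_nth: "chn ps \<longleftrightarrow> (\<forall>k. k + 1 < length ps \<longrightarrow> link (ps!k) (ps!(k+1)))"
proof (induction ps rule: chn.induct)
  case (3 g h ps)
  show ?case
  proof
    assume "chn (g # h # ps)"
    then have a: "link g h" "\<forall>k. k + 1 < length (h#ps) \<longrightarrow> link ((h#ps)!k) ((h#ps)!(k+1))"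
      using 3 by auto
    show "\<forall>k. k + 1 < length (g # h # ps) \<longrightarrow> link ((g # h # ps) ! k) ((g # h # ps) ! (k + 1))"
    proof (intro allI impI)
      fix k assume "k + 1 < length (g # h # ps)"
      then show "link ((g # h # ps) ! k) ((g # h # ps) ! (k + 1))"
        using a by (cases k) auto
    qed
  next
    assume a: "\<forall>k. k + 1 < length (g # h # ps) \<longrightarrow> link ((g # h # ps) ! k) ((g # h # ps) ! (k + 1))"
    have "link g h" using a[rule_format, of 0] by simp
    moreover have "\<forall>k. k + 1 < length (h#ps) \<longrightarrow> link ((h#ps)!k) ((h#ps)!(k+1))"
    proof (intro allI impI)
      fix k assume "k + 1 < length (h#ps)"
      then show "link ((h#ps)!k) ((h#ps)!(k+1))" using a[rule_format, of "Suc k"] by simp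
    qed
    ultimately show "chn (g # h # ps)" using 3 by simp
  qed
qed auto

definition wt :: "gen list \<Rightarrow> nat" where
  "wt ps = (\<Sum>g\<leftarrow>ps. col (snd g) - col (fst g) + 1)"

lemma wt_Nil[simp]: "wt [] = 0" by (simp add: wt_def)
lemma wt_Cons: "wt (g # ps) = col (snd g) - col (fst g) + 1 + wt ps" by (simp add: wt_def)
lemma wt_append: "wt (xs @ ys) = wt xs + wt ys" by (simp add: wt_def)
lemma wt_ge_length: "length ps \<le> wt ps" by (induction ps) (auto simp: wt_Cons)

definition valid :: "nat \<Rightarrow> nat \<Rightarrow> gen list \<Rightarrow> bool" where
  "valid i j ps = (ps \<noteq> [] \<and> set ps \<subseteq> PG \<and> chn ps \<and> row (fst (hd ps)) = i \<and> row (snd (last ps)) = j)"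

definition VS :: "nat \<Rightarrow> nat \<Rightarrow> nat \<Rightarrow> gen list set" where
  "VS r i j = {ps. valid i j ps \<and> wt ps = r}"

lemma finite_VS: "finite (VS r i j)"
proof -
  have "VS r i j \<subseteq> {xs. set xs \<subseteq> PG \<and> length xs \<le> r}"
    unfolding VS_def valid_def using wt_ge_length by fastforce
  thus ?thesis by (rule finite_subset) (rule finite_lists_length_le, simp)
qed

definition sig :: "gen list \<Rightarrow> complex" where
  "sig ps = (\<Prod>g\<leftarrow>ps. sgn1 (bpar par (fst g)))"

lemma sig_append: "sig (xs @ ys) = sig xs * sig ys" by (simp add: sig_def)
lemma sig_Cons: "sig (g # ys) = sgn1 (bpar par (fst g)) * sig ys" by (simp add: sig_def)
lemma sig_Nil[simp]: "sig [] = 1" by (simp add: sig_def)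

lemma tterm_eq: "tterm m n l par ps = fa_scale (sig ps) (E ps)"
  by (simp add: tterm_def sig_def E_def)

lemma tseqs_eq: "1 \<le> s \<Longrightarrow> tseqs m n l r i j s = {ps \<in> VS r i j. length ps = s}"
proof -
  assume s: "1 \<le> s"
  show ?thesis
  proof (rule set_eqI)
    fix ps
    show "ps \<in> tseqs m n l r i j s \<longleftrightarrow> ps \<in> {ps \<in> VS r i j. length ps = s}"
    proof (cases "length ps = s")
      case False
      then show ?thesis by (simp add: tseqs_def)
    next
      case True
      have ne: "ps \<noteq> []" using True s by auto
      have pg: "set ps \<subseteq> PG \<longleftrightarrow> set ps \<subseteq> G \<and> (\<forall>k<s. col (fst (ps!k)) \<le> col (snd (ps!k)))"
      proof
        assume "set ps \<subseteq> PG"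
        then show "set ps \<subseteq> G \<and> (\<forall>k<s. col (fst (ps!k)) \<le> col (snd (ps!k)))"
          unfolding pgens_def using True by (auto dest!: nth_mem)
      next
        assume a: "set ps \<subseteq> G \<and> (\<forall>k<s. col (fst (ps!k)) \<le> col (snd (ps!k)))"
        show "set ps \<subseteq> PG"
        proof
          fix g assume "g \<in> set ps"
          then obtain k where "k < s" "g = ps!k" using True by (auto simp: in_set_conv_nth)
          thus "g \<in> PG" using a \<open>g \<in> set ps\<close> unfolding pgens_def by auto
        qed
      qed
      have w: "(\<Sum>k<s. col (snd (ps!k)) - col (fst (ps!k)) + 1) = wt ps"
        unfolding wt_def sum_list_sum_nth using True by (simp add: atLeast0LessThan)
      have hd: "hd ps = ps!0" using ne by (simp add: hd_conv_nth)
      have lst: "last ps = ps!(s-1)" using ne True by (simp add: last_conv_nth)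
      have chs: "chn ps \<longleftrightarrow> (\<forall>k. k + 1 < s \<longrightarrow> link (ps!k) (ps!(k+1)))"
        using chn_nth True by simp
      have "ps \<in> tseqs m n l r i j s \<longleftrightarrow> (set ps \<subseteq> G \<and> (\<forall>k<s. col (fst (ps!k)) \<le> col (snd (ps!k))))
          \<and> (\<Sum>k<s. col (snd (ps!k)) - col (fst (ps!k)) + 1) = r
          \<and> (\<forall>k. k + 1 < s \<longrightarrow> link (ps!k) (ps!(k+1))) \<and> row (fst (ps!0)) = i \<and> row (snd (ps!(s-1))) = j"
        using True s unfolding tseqs_def link_def by auto
      also have "\<dots> \<longleftrightarrow> set ps \<subseteq> PG \<and> wt ps = r \<and> chn ps \<and> row (fst (hd ps)) = i \<and> row (snd (last ps)) = j"
        unfolding pg[symmetric] w chs[symmetric] hd[symmetric] lst[symmetric] by simp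
      finally show ?thesis using True ne unfolding VS_def valid_def by auto
    qed
  qed
qed

lemma tT_eq:
  assumes "1 \<le> r"
  shows "tT m n l par r i j = fa_sum (VS r i j) (\<lambda>ps. fa_scale (sig ps) (E ps))"
proof (rule ext)
  fix w
  have "tT m n l par r i j w = (\<Sum>s\<in>{1..r}. \<Sum>ps\<in>{ps \<in> VS r i j. length ps = s}. tterm m n l par ps w)"
    using assms unfolding tT_def fa_sum_def by (simp add: tseqs_eq)
  also have "\<dots> = (\<Sum>ps\<in>VS r i j. tterm m n l par ps w)"
  proof (rule sum.group[OF finite_VS])
    show "finite {1..r}" by simp
    show "length ` VS r i j \<subseteq> {1..r}"
      unfolding VS_def valid_def using wt_ge_length by (auto simp: Suc_le_eq)
  qed
  finally show "tT m n l par r i j w = fa_sum (VS r i j) (\<lambda>ps. fa_scale (sig ps) (E ps)) w"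
    by (simp add: fa_sum_def tterm_eq)
qed

end

context W begin

lemma chn_append: "chn (xs @ ys) \<longleftrightarrow> chn xs \<and> chn ys \<and> (xs \<noteq> [] \<and> ys \<noteq> [] \<longrightarrow> link (last xs) (hd ys))"
proof (induction xs rule: chn.induct)
  case 1 then show ?case by simp
next
  case (2 g) then show ?case by (cases ys) auto
next
  case (3 g h ps) then show ?case by auto
qed

lemma chn_Cons: "chn (g # ys) \<longleftrightarrow> chn ys \<and> (ys \<noteq> [] \<longrightarrow> link g (hd ys))"
  by (cases ys) auto

definition PRE :: "nat \<Rightarrow> gen list \<Rightarrow> nat \<Rightarrow> nat \<Rightarrow> bool" where
  "PRE i pre k c0 = ((pre = [] \<and> k = i) \<or> (pre \<noteq> [] \<and> set pre \<subseteq> PG \<and> chn pre \<and> row (fst (hd pre)) = i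
       \<and> row (snd (last pre)) = k \<and> col (snd (last pre)) < c0))"

definition SUF :: "nat \<Rightarrow> gen list \<Rightarrow> nat \<Rightarrow> nat \<Rightarrow> bool" where
  "SUF j suf k c0 = ((suf = [] \<and> k = j) \<or> (suf \<noteq> [] \<and> set suf \<subseteq> PG \<and> chn suf \<and> row (fst (hd suf)) = k
       \<and> c0 < col (fst (hd suf)) \<and> row (snd (last suf)) = j))"

lemma valid_split: "valid i j (pre @ g # suf) \<longleftrightarrow>
   g \<in> PG \<and> PRE i pre (row (fst g)) (col (fst g)) \<and> SUF j suf (row (snd g)) (col (snd g))"
  unfolding valid_def PRE_def SUF_def
  by (cases "pre = []"; cases "suf = []") (auto simp: chn_append chn_Cons link_def)

lemma PRE_Nil[simp]: "PRE i [] k c0 \<longleftrightarrow> k = i" by (simp add: PRE_def)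
lemma SUF_Nil[simp]: "SUF j [] k c0 \<longleftrightarrow> k = j" by (simp add: SUF_def)

lemma PRE_snoc: "PRE i (pre @ [g]) k c0 \<longleftrightarrow>
   g \<in> PG \<and> PRE i pre (row (fst g)) (col (fst g)) \<and> row (snd g) = k \<and> col (snd g) < c0"
  unfolding PRE_def by (cases "pre = []") (auto simp: chn_append link_def)

lemma SUF_Cons: "SUF j (h # suf) k c0 \<longleftrightarrow>
   h \<in> PG \<and> row (fst h) = k \<and> c0 < col (fst h) \<and> SUF j suf (row (snd h)) (col (snd h))"
  unfolding SUF_def by (cases "suf = []") (auto simp: chn_Cons link_def)

lemma PG_col: "h \<in> PG \<Longrightarrow> col (fst h) \<le> col (snd h)" by (simp add: pgens_def)
lemma PG_G: "h \<in> PG \<Longrightarrow> h \<in> G" by (simp add: pgens_def)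

lemma SUF_cols: "SUF j suf k c0 \<Longrightarrow> h \<in> set suf \<Longrightarrow> c0 < col (fst h) \<and> c0 < col (snd h)"
proof (induction suf arbitrary: k c0)
  case (Cons h' suf)
  then have a: "h' \<in> PG" "c0 < col (fst h')" "SUF j suf (row (snd h')) (col (snd h'))"
    by (auto simp: SUF_Cons)
  show ?case
  proof (cases "h = h'")
    case True then show ?thesis using a PG_col[OF a(1)] by auto
  next
    case False
    then have "h \<in> set suf" using Cons.prems by auto
    from Cons.IH[OF a(3) this] show ?thesis using a PG_col[OF a(1)] by auto
  qed
qed simp

lemma SUF_PG: "SUF j suf k c0 \<Longrightarrow> set suf \<subseteq> PG"
  unfolding SUF_def by auto
lemma PRE_PG: "PRE i pre k c0 \<Longrightarrow> set pre \<subseteq> PG"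
  unfolding PRE_def by auto

lemma SUF_mono: "SUF j suf k c0 \<Longrightarrow> c1 \<le> c0 \<Longrightarrow> SUF j suf k c1"
  unfolding SUF_def by auto
lemma PRE_mono: "PRE i pre k c0 \<Longrightarrow> c0 \<le> c1 \<Longrightarrow> PRE i pre k c1"
  unfolding PRE_def by auto

lemma SUF_split: "SUF j suf k c0 \<longleftrightarrow> SUF j suf k (Suc c0) \<or>
     (\<exists>h suf'. suf = h # suf' \<and> fst h = (k, Suc c0) \<and> SUF j suf k c0)"
  unfolding SUF_def by (cases suf) (auto simp: row_def col_def prod_eq_iff)

lemma PRE_split: "PRE i pre k (Suc c0) \<longleftrightarrow> PRE i pre k c0 \<or>
     (pre \<noteq> [] \<and> snd (last pre) = (k, c0) \<and> PRE i pre k (Suc c0))"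
  unfolding PRE_def by (auto simp: row_def col_def prod_eq_iff)

end

definition shift :: "nat \<Rightarrow> nat \<Rightarrow> nat \<Rightarrow> (nat \<Rightarrow> bool) \<Rightarrow> gen \<Rightarrow> complex" where
  "shift m n l par g = (if fst g = snd g then sgn1 (bpar par (fst g)) * of_int (rho m n l (col (fst g))) else 0)"

lemma gen_et: "fa_gen g = fa_add (fa_scale (sc g) (etilde m n l par g)) (fa_scale (- shift m n l par g) fa_one)"
proof -
  have "etilde m n l par g = fa_scale (sc g) (fa_add (fa_gen g) (fa_scale (shift m n l par g) fa_one))"
    unfolding etilde_def sc_def shift_def by simp
  moreover have "sc g * sc g = 1" by simp
  ultimately show ?thesis
    by (intro ext) (simp add: fa_add_def fa_scale_def distrib_left mult.assoc[symmetric])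
qed

lemma row_pair[simp]: "row (a, b) = a" and col_pair[simp]: "col (a, b) = b"
  by (simp_all add: row_def col_def)

lemma boxes_iff[simp]: "(a, b) \<in> boxes m n l \<longleftrightarrow> a \<in> {1..m+n} \<and> b \<in> {1..l}"
  by (simp add: boxes_def)

lemma sc_same_col: "col (fst g) = col (snd g) \<Longrightarrow> sc g = 1" by (simp add: sc_def)

locale Adj = W +
  fixes P Q c :: nat
  assumes P: "P \<in> {1..m+n}" and Q: "Q \<in> {1..m+n}" and c1: "1 \<le> c" and cl: "Suc c \<le> l"
begin

abbreviation "p \<equiv> (P, Suc c)"
abbreviation "q \<equiv> (Q, c)"
abbreviation "x \<equiv> (p, q)"

lemma x_MG: "x \<in> MG" using P Q c1 cl by (simp add: mgens_def gens_def)

lemma mg_adj: "K \<in> {1..m+n} \<Longrightarrow> K' \<in> {1..m+n} \<Longrightarrow> ((K, Suc c), (K', c)) \<in> MG"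
  using c1 cl by (simp add: mgens_def gens_def)

lemma chi_adj: "K \<in> {1..m+n} \<Longrightarrow> K' \<in> {1..m+n} \<Longrightarrow>
   ch ((K, Suc c), (K', c)) = (if K = K' then sgn1 (par K) else 0)"
  using c1 cl by (simp add: chi_val gens_def bpar_def)

lemma eps_even: "gpar par y = False \<Longrightarrow> eps y ps = 1"
  by (induction ps) (simp_all add: eps_Cons sgn2_def)

lemma gpar_same_row: "row (fst y) = row (snd y) \<Longrightarrow> gpar par y = False"
  by (simp add: gpar_def bpar_def)

lemma redA:
  assumes K: "K \<in> {1..m+n}" and S: "SUF j suf K c"
  shows "iq (fa_mult (fa_gen (p, (K, c))) (E suf))
     (fa_add (if K = P then fa_scale (sgn1 (par P)) (E suf) else fa_zero)
       (case suf of [] \<Rightarrow> fa_zero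
         | h # suf' \<Rightarrow> if snd h = p then
              fa_scale (- sgn2 (par P \<noteq> par K) (par K \<noteq> par P) * sgn1 (par K)) (E suf') else fa_zero))"
proof -
  define y where "y = (p, (K, c))"
  have yM: "y \<in> MG" unfolding y_def using mg_adj[OF P K] .
  have sufG: "set suf \<subseteq> G" using SUF_PG[OF S] PG_G by auto
  have "iq (fa_mult (fa_gen y) (E suf)) (fa_add (Xp y suf) (fa_scale (eps y suf) (fa_mult (E suf) (fa_gen y))))"
    by (rule jeq_ieq, rule expand) (use yM mgens_gens sufG in auto)
  also have "iq \<dots> (fa_add (Xp y suf) (fa_scale (eps y suf) (fa_scale (ch y) (E suf))))"
    by (intro ieq_add ieq_refl ieq_scale right_gen yM E_FA sufG)
  also have "\<dots> = fa_add (Xp y suf) (if K = P then fa_scale (sgn1 (par P)) (E suf) else fa_zero)"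
  proof -
    have "ch y = (if K = P then sgn1 (par P) else 0)" unfolding y_def using chi_adj[OF P K] by simp
    moreover have "K = P \<Longrightarrow> eps y suf = 1" by (rule eps_even) (simp add: y_def gpar_same_row)
    ultimately show ?thesis by auto
  qed
  also have "iq \<dots> (fa_add (case suf of [] \<Rightarrow> fa_zero
         | h # suf' \<Rightarrow> if snd h = p then
              fa_scale (- sgn2 (par P \<noteq> par K) (par K \<noteq> par P) * sgn1 (par K)) (E suf') else fa_zero)
         (if K = P then fa_scale (sgn1 (par P)) (E suf) else fa_zero))"
  proof (intro ieq_add ieq_refl)
    show "iq (Xp y suf) (case suf of [] \<Rightarrow> fa_zero
         | h # suf' \<Rightarrow> if snd h = p then
              fa_scale (- sgn2 (par P \<noteq> par K) (par K \<noteq> par P) * sgn1 (par K)) (E suf') else fa_zero)"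
    proof (cases suf)
      case Nil then show ?thesis by (simp add: ieq_refl)
    next
      case (Cons h suf')
      have h: "h \<in> PG" "row (fst h) = K" "c < col (fst h)" and S': "SUF j suf' (row (snd h)) (col (snd h))"
        using S Cons by (auto simp: SUF_Cons)
      have cols': "\<And>h'. h' \<in> set suf' \<Longrightarrow> col (snd h) < col (fst h') \<and> col (snd h) < col (snd h')"
        using SUF_cols[OF S'] by blast
      have hc: "col (fst h) \<le> col (snd h)" using PG_col[OF h(1)] .
      have suf'G: "set suf' \<subseteq> G" using SUF_PG[OF S'] PG_G by auto
      have X0: "Xp y suf' = fa_zero"
      proof (rule Xp_zero, rule Bt_zero)
        fix h' assume "h' \<in> set suf'"
        from cols'[OF this] show "snd y \<noteq> fst h'" "snd h' \<noteq> fst y" using h hc by (auto simp: y_def col_def prod_eq_iff)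
      qed
      have XpE: "Xp y suf = fa_mult (Bt y h) (E suf')" using Cons X0 by simp
      show ?thesis
      proof (cases "snd h = p")
        case False
        have "Bt y h = fa_zero" by (rule Bt_zero) (use False h in \<open>auto simp: y_def col_def prod_eq_iff\<close>)
        then show ?thesis using Cons XpE False by (simp add: ieq_refl)
      next
        case True
        have fh: "fst h = (K, Suc c)" using h hc True by (cases "fst h") auto
        have sch: "sc h = 1" using fh True by (simp add: sc_def)
        define z where "z = ((K, Suc c), (K, c))"
        have zM: "z \<in> MG" unfolding z_def using mg_adj[OF K K] .
        have Bt: "Bt y h = fa_scale (- sgn2 (par P \<noteq> par K) (par K \<noteq> par P)) (fa_gen z)"
          unfolding Bt_def gl_br_def sch using True fh h
          by (intro ext) (auto simp: y_def z_def fa_diff_def fa_scale_def fa_zero_def gpar_def bpar_def)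
        have "iq (fa_mult (fa_gen z) (E suf')) (fa_scale (eps z suf' * ch z) (E suf'))"
        proof (rule pass[OF zM suf'G], rule Bt_zero)
          fix h' assume "h' \<in> set suf'"
          from cols'[OF this] show "snd z \<noteq> fst h'" "snd h' \<noteq> fst z" using True by (auto simp: z_def col_def prod_eq_iff)
        qed
        moreover have "eps z suf' * ch z = sgn1 (par K)"
          using eps_even[of z suf'] chi_adj[OF K K] by (simp add: z_def gpar_same_row)
        ultimately have "iq (fa_mult (fa_gen z) (E suf')) (fa_scale (sgn1 (par K)) (E suf'))" by simp
        then have "iq (fa_scale (- sgn2 (par P \<noteq> par K) (par K \<noteq> par P)) (fa_mult (fa_gen z) (E suf')))
             (fa_scale (- sgn2 (par P \<noteq> par K) (par K \<noteq> par P)) (fa_scale (sgn1 (par K)) (E suf')))"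
          by (rule ieq_scale)
        then show ?thesis using Cons XpE True by (simp add: Bt fa_mult_scale_left)
      qed
    qed
  qed
  also have "\<dots> = fa_add (if K = P then fa_scale (sgn1 (par P)) (E suf) else fa_zero)
       (case suf of [] \<Rightarrow> fa_zero
         | h # suf' \<Rightarrow> if snd h = p then
              fa_scale (- sgn2 (par P \<noteq> par K) (par K \<noteq> par P) * sgn1 (par K)) (E suf') else fa_zero)"
    by (rule fa_add_comm)
  finally show ?thesis unfolding y_def .
qed

lemma redB:
  assumes A: "A \<in> {1..m+n}" and S: "SUF j suf P (Suc c)"
  shows "iq (fa_mult (fa_gen ((A, Suc c), q)) (E suf))
            (if A = Q then fa_scale (sgn1 (par Q)) (E suf) else fa_zero)"
proof -
  define z where "z = ((A, Suc c), q)"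
  have zM: "z \<in> MG" unfolding z_def using mg_adj[OF A Q] .
  have sufG: "set suf \<subseteq> G" using SUF_PG[OF S] PG_G by auto
  have "iq (fa_mult (fa_gen z) (E suf)) (fa_scale (eps z suf * ch z) (E suf))"
  proof (rule pass[OF zM sufG], rule Bt_zero)
    fix h' assume "h' \<in> set suf"
    from SUF_cols[OF S this] show "snd z \<noteq> fst h'" "snd h' \<noteq> fst z" by (auto simp: z_def col_def prod_eq_iff)
  qed
  moreover have "eps z suf * ch z = (if A = Q then sgn1 (par Q) else 0)"
    using eps_even[of z suf] chi_adj[OF A Q] by (cases "A = Q") (simp_all add: z_def gpar_same_row)
  ultimately show ?thesis unfolding z_def by (auto simp: fa_scale_zero)
qed

end

lemma ieq_diff: "ieq m n l par a a' \<Longrightarrow> ieq m n l par b b' \<Longrightarrow> ieq m n l par (fa_diff a b) (fa_diff a' b')"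
  unfolding fa_diff_as_add by (intro ieq_add ieq_scale)

context Adj begin

abbreviation "sh \<equiv> shift m n l par"

definition cA :: "nat \<Rightarrow> complex" where
  "cA K = - sgn2 (par P \<noteq> par K) (par K \<noteq> par P) * sgn1 (par K)"

definition RA :: "gen list \<Rightarrow> gen list \<Rightarrow> nat \<Rightarrow> fa" where
  "RA pre suf K = fa_add (if K = P then fa_scale (sgn1 (par P)) (E (pre @ suf)) else fa_zero)
      (case suf of [] \<Rightarrow> fa_zero | h # suf' \<Rightarrow> if snd h = p then fa_scale (cA K) (E (pre @ suf')) else fa_zero)"

definition LL :: "gen list \<Rightarrow> gen \<Rightarrow> gen list \<Rightarrow> fa" where
  "LL pre g suf = (if fst g = q then
      (if c < col (snd g) then fa_add (fa_scale (sc (p, snd g)) (E (pre @ (p, snd g) # suf)))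
                                      (fa_scale (- sh (p, snd g)) (E (pre @ suf)))
       else RA pre suf (row (snd g)))
    else fa_zero)"

definition RR :: "gen list \<Rightarrow> gen \<Rightarrow> gen list \<Rightarrow> fa" where
  "RR pre g suf = (if snd g = p then
      (if col (fst g) \<le> c then fa_add (fa_scale (sc (fst g, q)) (E (pre @ (fst g, q) # suf)))
                                      (fa_scale (- sh (fst g, q)) (E (pre @ suf)))
       else (if row (fst g) = Q then fa_scale (sgn1 (par Q)) (E (pre @ suf)) else fa_zero))
    else fa_zero)"

lemma gen_E: "fa_mult (fa_gen g) (E suf) =
   fa_add (fa_scale (sc g) (E (g # suf))) (fa_scale (- sh g) (E suf))"
  by (subst gen_et) (simp add: fa_mult_add_left fa_mult_scale_left E_Cons)

lemma gen_mid: "fa_mult (E pre) (fa_mult (fa_gen g) (E suf)) =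
   fa_add (fa_scale (sc g) (E (pre @ g # suf))) (fa_scale (- sh g) (E (pre @ suf)))"
  by (simp add: gen_E fa_mult_add_right fa_mult_scale_right E_append E_Cons)

lemma valid_parts:
  assumes "valid i j (pre @ g # suf)"
  shows "g \<in> PG" "PRE i pre (row (fst g)) (col (fst g))" "SUF j suf (row (snd g)) (col (snd g))"
        "E pre \<in> FA m n l" "E suf \<in> FA m n l"
  using assms unfolding valid_split
  by (auto intro!: E_FA dest!: PRE_PG SUF_PG dest: PG_G)

lemma red_L:
  assumes v: "valid i j (pre @ g # suf)"
  shows "iq (fa_mult (E pre) (fa_mult (if q = fst g then fa_gen (p, snd g) else fa_zero) (E suf))) (LL pre g suf)"
proof (cases "fst g = q")
  case False
  then show ?thesis unfolding LL_def by (auto simp: ieq_refl)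
next
  case True
  note vp = valid_parts[OF v]
  have gc: "c \<le> col (snd g)" using PG_col[OF vp(1)] True by simp
  show ?thesis
  proof (cases "c < col (snd g)")
    case True2: True
    show ?thesis unfolding LL_def using True True2 by (simp add: gen_mid ieq_refl)
  next
    case False
    obtain K where b: "snd g = (K, c)" using gc False by (cases "snd g") auto
    have K: "K \<in> {1..m+n}" using vp(1) b by (auto simp: pgens_def gens_def)
    have S: "SUF j suf K c" using vp(3) b by simp
    have "iq (fa_mult (E pre) (fa_mult (fa_gen (p, (K, c))) (E suf)))
       (fa_mult (E pre) (fa_add (if K = P then fa_scale (sgn1 (par P)) (E suf) else fa_zero)
       (case suf of [] \<Rightarrow> fa_zero
         | h # suf' \<Rightarrow> if snd h = p then
              fa_scale (- sgn2 (par P \<noteq> par K) (par K \<noteq> par P) * sgn1 (par K)) (E suf') else fa_zero)))"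
      by (rule ieq_left[OF redA[OF K S] vp(4)])
    also have "\<dots> = RA pre suf K"
      unfolding RA_def cA_def
      by (cases suf) (simp_all add: fa_mult_add_right fa_mult_scale_right E_append)
    finally show ?thesis unfolding LL_def using True False b by simp
  qed
qed

lemma red_R:
  assumes v: "valid i j (pre @ g # suf)"
  shows "iq (fa_mult (E pre) (fa_mult (if snd g = p then fa_gen (fst g, q) else fa_zero) (E suf))) (RR pre g suf)"
proof (cases "snd g = p")
  case False
  then show ?thesis unfolding RR_def by (auto simp: ieq_refl)
next
  case True
  note vp = valid_parts[OF v]
  have gc: "col (fst g) \<le> Suc c" using PG_col[OF vp(1)] True by simp
  show ?thesis
  proof (cases "col (fst g) \<le> c")
    case True2: True
    show ?thesis unfolding RR_def using True True2 by (simp add: gen_mid ieq_refl)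
  next
    case False
    obtain A where a: "fst g = (A, Suc c)" using gc False by (cases "fst g") auto
    have A: "A \<in> {1..m+n}" using vp(1) a by (auto simp: pgens_def gens_def)
    have S: "SUF j suf P (Suc c)" using vp(3) True by simp
    have "iq (fa_mult (E pre) (fa_mult (fa_gen ((A, Suc c), q)) (E suf)))
       (fa_mult (E pre) (if A = Q then fa_scale (sgn1 (par Q)) (E suf) else fa_zero))"
      by (rule ieq_left[OF redB[OF A S] vp(4)])
    also have "\<dots> = (if A = Q then fa_scale (sgn1 (par Q)) (E (pre @ suf)) else fa_zero)"
      by (simp add: fa_mult_scale_right E_append)
    finally show ?thesis unfolding RR_def using True False a by simp
  qed
qed

lemma red:
  assumes v: "valid i j (pre @ g # suf)"
  shows "iq (fa_mult (E pre) (fa_mult (Bt x g) (E suf)))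
     (fa_scale (sc g) (fa_diff (LL pre g suf) (fa_scale (sgn2 (gpar par x) (gpar par g)) (RR pre g suf))))"
proof -
  have Bt: "Bt x g = fa_scale (sc g) (fa_diff (if q = fst g then fa_gen (p, snd g) else fa_zero)
      (fa_scale (sgn2 (gpar par x) (gpar par g)) (if snd g = p then fa_gen (fst g, q) else fa_zero)))"
    unfolding Bt_def gl_br_def by simp
  have "fa_mult (E pre) (fa_mult (Bt x g) (E suf)) = fa_scale (sc g) (fa_diff
     (fa_mult (E pre) (fa_mult (if q = fst g then fa_gen (p, snd g) else fa_zero) (E suf)))
     (fa_scale (sgn2 (gpar par x) (gpar par g)) (fa_mult (E pre) (fa_mult (if snd g = p then fa_gen (fst g, q) else fa_zero) (E suf)))))"
    unfolding Bt by (simp add: fa_mult_scale_left fa_mult_scale_right fa_mult_diff_left fa_mult_diff_right)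
  also have "iq \<dots> (fa_scale (sc g) (fa_diff (LL pre g suf) (fa_scale (sgn2 (gpar par x) (gpar par g)) (RR pre g suf))))"
    by (intro ieq_scale ieq_diff red_L[OF v] red_R[OF v])
  finally show ?thesis .
qed

end

lemma fa_sum_add: "fa_sum S (\<lambda>s. fa_add (F s) (G s)) = fa_add (fa_sum S F) (fa_sum S G)"
  by (rule ext) (simp add: fa_sum_def fa_add_def sum.distrib)
lemma fa_sum_if: "finite S \<Longrightarrow> fa_sum S (\<lambda>s. if C s then F s else fa_zero) = fa_sum {s\<in>S. C s} F"
proof (rule ext)
  fix w assume S: "finite S"
  have "fa_sum S (\<lambda>s. if C s then F s else fa_zero) w = (\<Sum>s\<in>S. if C s then F s w else 0)"
    unfolding fa_sum_def by (rule sum.cong) (auto simp: fa_zero_def)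
  also have "\<dots> = fa_sum {s\<in>S. C s} F w" unfolding fa_sum_def by (simp add: sum.inter_filter S)
  finally show "fa_sum S (\<lambda>s. if C s then F s else fa_zero) w = fa_sum {s\<in>S. C s} F w" .
qed
lemma fa_sum_split: "finite S \<Longrightarrow> fa_sum S F = fa_add (fa_sum {s\<in>S. C s} F) (fa_sum {s\<in>S. \<not> C s} F)"
proof (rule ext)
  fix w assume S: "finite S"
  have "S = {s\<in>S. C s} \<union> {s\<in>S. \<not> C s}" by auto
  then have "(\<Sum>s\<in>S. F s w) = (\<Sum>s\<in>{s\<in>S. C s} \<union> {s\<in>S. \<not> C s}. F s w)" by simp
  also have "\<dots> = (\<Sum>s\<in>{s\<in>S. C s}. F s w) + (\<Sum>s\<in>{s\<in>S. \<not> C s}. F s w)"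
    by (rule sum.union_disjoint) (use S in auto)
  finally show "fa_sum S F w = fa_add (fa_sum {s\<in>S. C s} F) (fa_sum {s\<in>S. \<not> C s} F) w"
    by (simp add: fa_sum_def fa_add_def)
qed
lemma fa_sum_bij: "bij_betw \<phi> A B \<Longrightarrow> fa_sum B F = fa_sum A (\<lambda>a. F (\<phi> a))"
proof (rule ext)
  fix w assume b: "bij_betw \<phi> A B"
  show "fa_sum B F w = fa_sum A (\<lambda>a. F (\<phi> a)) w"
    unfolding fa_sum_def using sum.reindex_bij_betw[OF b, of "\<lambda>s. F s w"] by simp
qed
lemma pair_cancel:
  assumes "bij_betw \<phi> A B" "\<And>a. a \<in> A \<Longrightarrow> FB (\<phi> a) = fa_scale (-1) (FA' a)"
  shows "fa_add (fa_sum A FA') (fa_sum B FB) = fa_zero"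
proof -
  have "fa_sum B FB = fa_sum A (\<lambda>a. fa_scale (-1) (FA' a))"
    unfolding fa_sum_bij[OF assms(1)] by (rule fa_sum_cong) (simp add: assms(2))
  thus ?thesis by (intro ext) (simp add: fa_sum_def fa_add_def fa_scale_def fa_zero_def sum_negf)
qed
lemma fa_sum_zero: "fa_sum S (\<lambda>s. fa_zero) = fa_zero"
  by (rule ext) (simp add: fa_sum_def fa_zero_def)
lemma fa_sum_cart: "finite A \<Longrightarrow> finite B \<Longrightarrow> fa_sum (A \<times> B) F = fa_sum A (\<lambda>a. fa_sum B (\<lambda>b. F (a, b)))"
  by (rule ext) (simp add: fa_sum_def sum.cartesian_product)
lemma fa_sum_scale_const: "fa_sum S (\<lambda>s. fa_scale (k s) f) = fa_scale (\<Sum>s\<in>S. k s) f"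
  by (rule ext) (simp add: fa_sum_def fa_scale_def sum_distrib_right)

locale Main = Adj +
  fixes i j r :: nat
begin

definition TR :: "(gen list \<times> gen \<times> gen list) set" where
  "TR = {(pre, g, suf). pre @ g # suf \<in> VS r i j}"

lemma finite_TR: "finite TR"
proof -
  have "TR \<subseteq> (\<Union>ps\<in>VS r i j. splitsC ps)" unfolding TR_def splitsC_def by auto
  moreover have "finite (\<Union>ps\<in>VS r i j. splitsC ps)" using finite_VS by auto
  ultimately show ?thesis by (rule finite_subset)
qed

lemma TR_iff: "(pre, g, suf) \<in> TR \<longleftrightarrow> g \<in> PG \<and> PRE i pre (row (fst g)) (col (fst g))
   \<and> SUF j suf (row (snd g)) (col (snd g)) \<and> wt pre + (col (snd g) - col (fst g) + 1) + wt suf = r"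
  unfolding TR_def VS_def by (simp add: valid_split wt_append wt_Cons add.assoc)

definition Phi :: "gen list \<Rightarrow> gen \<Rightarrow> gen list \<Rightarrow> complex" where
  "Phi pre g suf = sig (pre @ g # suf) * eps x pre * sc g"

definition sx :: "gen \<Rightarrow> complex" where
  "sx g = sgn2 (gpar par x) (gpar par g)"

definition Red :: "gen list \<times> gen \<times> gen list \<Rightarrow> fa" where
  "Red \<tau> = (case \<tau> of (pre, g, suf) \<Rightarrow>
     fa_scale (sig (pre @ g # suf) * eps x pre * sc g) (fa_diff (LL pre g suf) (fa_scale (sx g) (RR pre g suf))))"

definition P1 :: "gen list \<times> gen \<times> gen list \<Rightarrow> fa" where
  "P1 \<tau> = (case \<tau> of (pre, g, suf) \<Rightarrow> if fst g = q \<and> c < col (snd g) then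
      fa_scale (Phi pre g suf * sc (p, snd g)) (E (pre @ (p, snd g) # suf)) else fa_zero)"
definition P3 :: "gen list \<times> gen \<times> gen list \<Rightarrow> fa" where
  "P3 \<tau> = (case \<tau> of (pre, g, suf) \<Rightarrow> if g = (q, (P, c)) then
      fa_scale (Phi pre g suf * sgn1 (par P)) (E (pre @ suf)) else fa_zero)"
definition P4 :: "gen list \<times> gen \<times> gen list \<Rightarrow> fa" where
  "P4 \<tau> = (case \<tau> of (pre, g, suf) \<Rightarrow> if fst g = q \<and> col (snd g) = c \<and> suf \<noteq> [] \<and> snd (hd suf) = p then
      fa_scale (Phi pre g suf * cA (row (snd g))) (E (pre @ tl suf)) else fa_zero)"
definition P2 :: "gen list \<times> gen \<times> gen list \<Rightarrow> fa" where
  "P2 \<tau> = (case \<tau> of (pre, g, suf) \<Rightarrow> if snd g = p \<and> col (fst g) \<le> c then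
      fa_scale (- sx g * Phi pre g suf * sc (fst g, q)) (E (pre @ (fst g, q) # suf)) else fa_zero)"
definition P5 :: "gen list \<times> gen \<times> gen list \<Rightarrow> fa" where
  "P5 \<tau> = (case \<tau> of (pre, g, suf) \<Rightarrow> if g = ((Q, Suc c), p) then
      fa_scale (- sx g * Phi pre g suf * sgn1 (par Q)) (E (pre @ suf)) else fa_zero)"
definition P0 :: "gen list \<times> gen \<times> gen list \<Rightarrow> fa" where
  "P0 \<tau> = (case \<tau> of (pre, g, suf) \<Rightarrow> if g = (q, p) then
      fa_scale (Phi pre g suf * (- sh (p, p) + sx g * sh (q, q))) (E (pre @ suf)) else fa_zero)"

lemma sh_offdiag: "fst g \<noteq> snd g \<Longrightarrow> sh g = 0" by (simp add: shift_def)

lemma LL_eq: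
  assumes gc: "col (fst g) \<le> col (snd g)"
  shows "LL pre g suf w =
     (if fst g = q \<and> c < col (snd g) then sc (p, snd g) * E (pre @ (p, snd g) # suf) w else 0)
   + (if g = (q, (P, c)) then sgn1 (par P) * E (pre @ suf) w else 0)
   + (if fst g = q \<and> col (snd g) = c \<and> suf \<noteq> [] \<and> snd (hd suf) = p then cA (row (snd g)) * E (pre @ tl suf) w else 0)
   + (if g = (q, p) then - sh (p, p) * E (pre @ suf) w else 0)"
proof (cases "fst g = q")
  case False
  then show ?thesis by (auto simp: LL_def fa_zero_def)
next
  case True
  obtain b where gb: "g = (q, b)" using True by (cases g) auto
  show ?thesis
  proof (cases "c < col b")
    case True2: True
    have "g \<noteq> (q, (P, c))" using True2 gb by auto
    moreover have "sh (p, b) = (if b = p then sh (p, p) else 0)" by (simp add: shift_def)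
    ultimately show ?thesis using True2 gb by (simp add: LL_def fa_add_def fa_scale_def)
  next
    case False
    then have bc: "col b = c" using gc gb by simp
    then have nb: "b \<noteq> p" by (cases b) auto
    obtain K where bK: "b = (K, c)" using bc by (cases b) auto
    show ?thesis using False nb unfolding gb bK
      by (cases suf) (simp_all add: LL_def RA_def fa_add_def fa_scale_def fa_zero_def)
  qed
qed

lemma RR_eq:
  assumes gc: "col (fst g) \<le> col (snd g)"
  shows "RR pre g suf w =
     (if snd g = p \<and> col (fst g) \<le> c then sc (fst g, q) * E (pre @ (fst g, q) # suf) w else 0)
   + (if g = ((Q, Suc c), p) then sgn1 (par Q) * E (pre @ suf) w else 0)
   + (if g = (q, p) then - sh (q, q) * E (pre @ suf) w else 0)"
proof (cases "snd g = p")
  case False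
  then show ?thesis by (auto simp: RR_def fa_zero_def)
next
  case True
  obtain a where ga: "g = (a, p)" using True by (cases g) auto
  show ?thesis
  proof (cases "col a \<le> c")
    case True2: True
    have "g \<noteq> ((Q, Suc c), p)" using True2 ga by auto
    moreover have "sh (a, q) = (if a = q then sh (q, q) else 0)" by (simp add: shift_def)
    ultimately show ?thesis using True2 ga by (simp add: RR_def fa_add_def fa_scale_def)
  next
    case False
    then have ac: "col a = Suc c" using gc ga by simp
    then have na: "a \<noteq> q" by auto
    obtain A where aA: "a = (A, Suc c)" using ac by (cases a) auto
    show ?thesis using False na unfolding ga aA
      by (simp add: RR_def fa_scale_def fa_zero_def)
  qed
qed

lemma minus_if0: "- (if C then (t::complex) else 0) = (if C then - t else 0)" by simp
lemma mult_if0: "(k::complex) * (if C then t else 0) = (if C then k * t else 0)" by simp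

lemma Red_decomp:
  assumes "\<tau> \<in> TR"
  shows "Red \<tau> = fa_add (P1 \<tau>) (fa_add (P3 \<tau>) (fa_add (P4 \<tau>) (fa_add (P2 \<tau>) (fa_add (P5 \<tau>) (P0 \<tau>)))))"
proof -
  obtain pre g suf where t: "\<tau> = (pre, g, suf)" by (cases \<tau>) auto
  have g: "g \<in> PG" using assms t by (simp add: TR_iff)
  have gc: "col (fst g) \<le> col (snd g)" using PG_col[OF g] .
  show ?thesis
  proof (rule ext)
    fix w
    define Ph where "Ph = Phi pre g suf"
    have p1: "P1 \<tau> w = (if fst g = q \<and> c < col (snd g) then Ph * (sc (p, snd g) * E (pre @ (p, snd g) # suf) w) else 0)"
      unfolding t P1_def Ph_def by (simp add: fa_scale_def fa_zero_def)
    have p3: "P3 \<tau> w = (if g = (q, (P, c)) then Ph * (sgn1 (par P) * E (pre @ suf) w) else 0)"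
      unfolding t P3_def Ph_def by (simp add: fa_scale_def fa_zero_def)
    have p4: "P4 \<tau> w = (if fst g = q \<and> col (snd g) = c \<and> suf \<noteq> [] \<and> snd (hd suf) = p then Ph * (cA (row (snd g)) * E (pre @ tl suf) w) else 0)"
      unfolding t P4_def Ph_def by (simp add: fa_scale_def fa_zero_def)
    have p2: "P2 \<tau> w = (if snd g = p \<and> col (fst g) \<le> c then - (Ph * (sx g * (sc (fst g, q) * E (pre @ (fst g, q) # suf) w))) else 0)"
      unfolding t P2_def Ph_def by (simp add: fa_scale_def fa_zero_def)
    have p5: "P5 \<tau> w = (if g = ((Q, Suc c), p) then - (Ph * (sx g * (sgn1 (par Q) * E (pre @ suf) w))) else 0)"
      unfolding t P5_def Ph_def by (simp add: fa_scale_def fa_zero_def)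
    have p0: "P0 \<tau> w = (if g = (q, p) then Ph * (- sh (p, p) * E (pre @ suf) w) else 0)
                       + (if g = (q, p) then - (Ph * (sx g * (- sh (q, q) * E (pre @ suf) w))) else 0)"
      unfolding t P0_def Ph_def by (simp add: fa_scale_def fa_zero_def algebra_simps)
    have "Red \<tau> w = Ph * (LL pre g suf w - sx g * RR pre g suf w)"
      unfolding t Red_def Phi_def Ph_def by (simp add: fa_diff_def fa_scale_def)
    also have "\<dots> = fa_add (P1 \<tau>) (fa_add (P3 \<tau>) (fa_add (P4 \<tau>) (fa_add (P2 \<tau>) (fa_add (P5 \<tau>) (P0 \<tau>))))) w"
      unfolding LL_eq[OF gc] RR_eq[OF gc] fa_add_def p1 p2 p3 p4 p5 p0
      by (simp only: right_diff_distrib distrib_left mult_if0 diff_conv_add_uminus minus_if0 add.assoc minus_add_distrib mult_minus_right)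
         (simp only: add_ac)
    finally show "Red \<tau> w = fa_add (P1 \<tau>) (fa_add (P3 \<tau>) (fa_add (P4 \<tau>) (fa_add (P2 \<tau>) (fa_add (P5 \<tau>) (P0 \<tau>))))) w" .
  qed
qed

end

lemma sc_nat: "col (fst g) \<le> col (snd g) \<Longrightarrow> sc g = (-1) ^ (col (snd g) - col (fst g))"
proof -
  assume a: "col (fst g) \<le> col (snd g)"
  have "nat \<bar>int (col (snd g)) - int (col (fst g))\<bar> = col (snd g) - col (fst g)" using a by arith
  thus ?thesis unfolding sc_def by (simp only:)
qed

lemma my_bijI: "(\<And>a. a \<in> A \<Longrightarrow> f a \<in> B) \<Longrightarrow> (\<And>b. b \<in> B \<Longrightarrow> g b \<in> A) \<Longrightarrow>
  (\<And>a. a \<in> A \<Longrightarrow> g (f a) = a) \<Longrightarrow> (\<And>b. b \<in> B \<Longrightarrow> f (g b) = b) \<Longrightarrow> bij_betw f A B"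
  by (rule bij_betw_byWitness[where f'=g]) auto

context Main begin

lemma PG_pair: "(a, b) \<in> PG \<longleftrightarrow> a \<in> boxes m n l \<and> b \<in> boxes m n l \<and> col a \<le> col b"
  by (simp add: pgens_def gens_def)

lemma sig_split: "sig (pre @ g # suf) = sig pre * sgn1 (par (fst (fst g))) * sig suf"
  by (simp add: sig_append sig_Cons bpar_def row_def)

definition V1 where "V1 \<tau> = (case \<tau> of (pre, g, suf) \<Rightarrow>
      fa_scale (Phi pre g suf * sc (p, snd g)) (E (pre @ (p, snd g) # suf)))"
definition V3 where "V3 \<tau> = (case \<tau> of (pre, g, suf) \<Rightarrow>
      fa_scale (Phi pre g suf * sgn1 (par P)) (E (pre @ suf)))"

definition "A1 = {\<tau> \<in> TR. case \<tau> of (pre, g, suf) \<Rightarrow> fst g = q \<and> c < col (snd g)}"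
definition "B3a = {\<tau> \<in> TR. case \<tau> of (pre, g, suf) \<Rightarrow> g = (q, (P, c)) \<and> suf \<noteq> [] \<and> col (fst (hd suf)) = Suc c}"

lemma A1_elim:
  assumes "\<tau> \<in> A1"
  obtains pre b suf where "\<tau> = (pre, (q, b), suf)" "(pre, (q, b), suf) \<in> TR" "c < col b"
proof -
  obtain pre g suf where t: "\<tau> = (pre, g, suf)" by (cases \<tau>)
  have tr: "(pre, g, suf) \<in> TR" and fg: "fst g = q" and cb: "c < col (snd g)"
    using assms unfolding A1_def t by simp_all
  have g: "g = (q, snd g)" using fg by (cases g) simp
  show ?thesis by (rule that[of pre "snd g" suf]) (use t tr cb g in simp_all)
qed

lemma B3a_elim:
  assumes "\<tau> \<in> B3a"
  obtains pre h suf where "\<tau> = (pre, (q, (P, c)), h # suf)" "(pre, (q, (P, c)), h # suf) \<in> TR" "col (fst h) = Suc c"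
proof -
  obtain pre g suf where t: "\<tau> = (pre, g, suf)" by (cases \<tau>)
  have tr: "(pre, g, suf) \<in> TR" and g: "g = (q, (P, c))" and ne: "suf \<noteq> []" and ch: "col (fst (hd suf)) = Suc c"
    using assms unfolding B3a_def t by auto
  obtain h suf' where s: "suf = h # suf'" using ne by (cases suf) auto
  show ?thesis by (rule that[of pre h suf']) (use t tr g s ch in simp_all)
qed

lemma bij_a: "bij_betw (\<lambda>(pre, g, suf). (pre, (q, (P, c)), (p, snd g) # suf)) A1 B3a"
proof (rule my_bijI[where g="\<lambda>(pre, g, suf). (pre, (q, snd (hd suf)), tl suf)"])
  fix \<tau> assume "\<tau> \<in> A1"
  then obtain pre b suf where t: "\<tau> = (pre, (q, b), suf)" and tr: "(pre, (q, b), suf) \<in> TR" and cb: "c < col b"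
    by (rule A1_elim)
  from tr have h: "(q, b) \<in> PG" "PRE i pre Q c" "SUF j suf (row b) (col b)" "wt pre + (col b - c + 1) + wt suf = r"
    by (simp_all add: TR_iff)
  have bb: "b \<in> boxes m n l" using h(1) by (simp add: PG_pair)
  have pb: "(p, b) \<in> PG" using bb cb P cl by (simp add: PG_pair)
  have qP: "(q, (P, c)) \<in> PG" using P Q c1 cl by (simp add: PG_pair)
  have "(pre, (q, (P, c)), (p, b) # suf) \<in> TR"
    unfolding TR_iff using h pb qP cb by (simp add: SUF_Cons wt_Cons)
  then show "(\<lambda>(pre, g, suf). (pre, (q, (P, c)), (p, snd g) # suf)) \<tau> \<in> B3a"
    unfolding t B3a_def by simp
  show "(\<lambda>(pre, g, suf). (pre, (q, snd (hd suf)), tl suf)) ((\<lambda>(pre, g, suf). (pre, (q, (P, c)), (p, snd g) # suf)) \<tau>) = \<tau>"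
    unfolding t by simp
next
  fix \<tau> assume "\<tau> \<in> B3a"
  then obtain pre h suf where t: "\<tau> = (pre, (q, (P, c)), h # suf)" and tr: "(pre, (q, (P, c)), h # suf) \<in> TR"
      and ch: "col (fst h) = Suc c"
    by (rule B3a_elim)
  from tr have hh: "PRE i pre Q c" "h \<in> PG" "row (fst h) = P" "SUF j suf (row (snd h)) (col (snd h))"
     "wt pre + 1 + wt (h # suf) = r" "(q, (P, c)) \<in> PG"
    by (simp_all add: TR_iff SUF_Cons)
  have fh: "fst h = p" using hh(3) ch by (cases "fst h") simp
  have hc: "col (fst h) \<le> col (snd h)" using PG_col[OF hh(2)] .
  have qq: "q \<in> boxes m n l" using hh(6) by (simp add: PG_pair)
  have sh: "snd h \<in> boxes m n l" using hh(2) by (cases h) (simp add: PG_pair)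
  have qh: "(q, snd h) \<in> PG" using qq sh ch hc by (simp add: PG_pair)
  have "(pre, (q, snd h), suf) \<in> TR" unfolding TR_iff using qh hh ch hc by (simp add: wt_Cons)
  moreover have "c < col (snd h)" using ch hc by simp
  ultimately show "(\<lambda>(pre, g, suf). (pre, (q, snd (hd suf)), tl suf)) \<tau> \<in> A1"
    unfolding t A1_def by simp
  show "(\<lambda>(pre, g, suf). (pre, (q, (P, c)), (p, snd g) # suf)) ((\<lambda>(pre, g, suf). (pre, (q, snd (hd suf)), tl suf)) \<tau>) = \<tau>"
    unfolding t using fh by (cases h) simp
qed

lemma cancel_a: "fa_add (fa_sum A1 V1) (fa_sum B3a V3) = fa_zero"
proof (rule pair_cancel[OF bij_a])
  fix \<tau> assume "\<tau> \<in> A1"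
  then obtain pre b suf where t: "\<tau> = (pre, (q, b), suf)" and tr: "(pre, (q, b), suf) \<in> TR" and cb: "c < col b"
    by (rule A1_elim)
  have s1: "sc (q, b) = (-1) ^ (col b - c)" using sc_nat[of "(q, b)"] cb by simp
  have s2: "sc (p, b) = (-1) ^ (col b - Suc c)" using sc_nat[of "(p, b)"] cb by simp
  have A0: "sc (q, b) * sc (p, b) = -1"
  proof -
    have "col b - c = Suc (col b - Suc c)" using cb by simp
    then show ?thesis unfolding s1 s2 by (simp add: power_add[symmetric] power_mult_distrib)
  qed
  have B0: "sgn1 (par P) * sgn1 (par P) = 1" by (simp add: sgn1_def)
  have co: "sig pre * sgn1 (par Q) * (sgn1 (par P) * sig suf) * eps x pre * sgn1 (par P)
     = - (sig pre * sgn1 (par Q) * sig suf * eps x pre * sc (q, b) * sc (p, b))"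
  proof -
    have "sig pre * sgn1 (par Q) * (sgn1 (par P) * sig suf) * eps x pre * sgn1 (par P) = (sgn1 (par P) * sgn1 (par P)) * (sig pre * sgn1 (par Q) * sig suf * eps x pre)"
      "sig pre * sgn1 (par Q) * sig suf * eps x pre * sc (q, b) * sc (p, b) = (sc (q, b) * sc (p, b)) * (sig pre * sgn1 (par Q) * sig suf * eps x pre)" by (simp_all add: mult_ac)
    then show ?thesis using A0 B0 by simp
  qed
  show "V3 ((\<lambda>(pre, g, suf). (pre, (q, (P, c)), (p, snd g) # suf)) \<tau>) = fa_scale (- 1) (V1 \<tau>)"
    unfolding t V1_def V3_def Phi_def sig_split
    by (simp add: sc_same_col sig_Cons bpar_def row_def co)
qed


definition V2 where "V2 \<tau> = (case \<tau> of (pre, g, suf) \<Rightarrow>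
      fa_scale (- sx g * Phi pre g suf * sc (fst g, q)) (E (pre @ (fst g, q) # suf)))"
definition V5 where "V5 \<tau> = (case \<tau> of (pre, g, suf) \<Rightarrow>
      fa_scale (- sx g * Phi pre g suf * sgn1 (par Q)) (E (pre @ suf)))"

definition "A2 = {\<tau> \<in> TR. case \<tau> of (pre, g, suf) \<Rightarrow> snd g = p \<and> col (fst g) \<le> c}"
definition "B5a = {\<tau> \<in> TR. case \<tau> of (pre, g, suf) \<Rightarrow> g = ((Q, Suc c), p) \<and> pre \<noteq> [] \<and> col (snd (last pre)) = c}"

lemma A2_elim:
  assumes "\<tau> \<in> A2"
  obtains pre a suf where "\<tau> = (pre, (a, p), suf)" "(pre, (a, p), suf) \<in> TR" "col a \<le> c"
proof -
  obtain pre g suf where t: "\<tau> = (pre, g, suf)" by (cases \<tau>)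
  have tr: "(pre, g, suf) \<in> TR" and fg: "snd g = p" and cb: "col (fst g) \<le> c"
    using assms unfolding A2_def t by simp_all
  have g: "g = (fst g, p)" using fg by (cases g) simp
  show ?thesis by (rule that[of pre "fst g" suf]) (use t tr cb g in simp_all)
qed

lemma B5a_elim:
  assumes "\<tau> \<in> B5a"
  obtains pre h suf where "\<tau> = (pre @ [h], ((Q, Suc c), p), suf)" "(pre @ [h], ((Q, Suc c), p), suf) \<in> TR" "col (snd h) = c"
proof -
  obtain pre g suf where t: "\<tau> = (pre, g, suf)" by (cases \<tau>)
  have tr: "(pre, g, suf) \<in> TR" and g: "g = ((Q, Suc c), p)" and ne: "pre \<noteq> []" and ch: "col (snd (last pre)) = c"
    using assms unfolding B5a_def t by auto
  obtain pre' h where s: "pre = pre' @ [h]" using ne by (cases pre rule: rev_cases) auto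
  show ?thesis by (rule that[of pre' h suf]) (use t tr g s ch in simp_all)
qed

lemma bij_b: "bij_betw (\<lambda>(pre, g, suf). (pre @ [(fst g, q)], ((Q, Suc c), p), suf)) A2 B5a"
proof (rule my_bijI[where g="\<lambda>(pre, g, suf). (butlast pre, (fst (last pre), p), suf)"])
  fix \<tau> assume "\<tau> \<in> A2"
  then obtain pre a suf where t: "\<tau> = (pre, (a, p), suf)" and tr: "(pre, (a, p), suf) \<in> TR" and ca: "col a \<le> c"
    by (rule A2_elim)
  from tr have h: "(a, p) \<in> PG" "PRE i pre (row a) (col a)" "SUF j suf P (Suc c)" "wt pre + (Suc c - col a + 1) + wt suf = r"
    by (simp_all add: TR_iff)
  have aa: "a \<in> boxes m n l" using h(1) by (simp add: PG_pair)
  have aq: "(a, q) \<in> PG" using aa ca Q c1 cl by (simp add: PG_pair)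
  have g5: "((Q, Suc c), p) \<in> PG" using P Q c1 cl by (simp add: PG_pair)
  have "(pre @ [(a, q)], ((Q, Suc c), p), suf) \<in> TR"
    unfolding TR_iff using h aq g5 ca by (simp add: PRE_snoc wt_append wt_Cons)
  then show "(\<lambda>(pre, g, suf). (pre @ [(fst g, q)], ((Q, Suc c), p), suf)) \<tau> \<in> B5a"
    unfolding t B5a_def by simp
  show "(\<lambda>(pre, g, suf). (butlast pre, (fst (last pre), p), suf)) ((\<lambda>(pre, g, suf). (pre @ [(fst g, q)], ((Q, Suc c), p), suf)) \<tau>) = \<tau>"
    unfolding t by simp
next
  fix \<tau> assume "\<tau> \<in> B5a"
  then obtain pre h suf where t: "\<tau> = (pre @ [h], ((Q, Suc c), p), suf)" and tr: "(pre @ [h], ((Q, Suc c), p), suf) \<in> TR"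
      and ch: "col (snd h) = c"
    by (rule B5a_elim)
  from tr have hh: "h \<in> PG" "PRE i pre (row (fst h)) (col (fst h))" "row (snd h) = Q" "SUF j suf P (Suc c)"
     "wt (pre @ [h]) + 1 + wt suf = r"
    by (simp_all add: TR_iff PRE_snoc)
  have sh: "snd h = q" using hh(3) ch by (cases "snd h") simp
  have hc: "col (fst h) \<le> col (snd h)" using PG_col[OF hh(1)] .
  have fb: "fst h \<in> boxes m n l" using hh(1) by (cases h) (simp add: PG_pair)
  have hp: "(fst h, p) \<in> PG" using fb hc ch P cl by (simp add: PG_pair)
  have "(pre, (fst h, p), suf) \<in> TR" unfolding TR_iff using hp hh ch hc by (simp add: wt_append wt_Cons)
  moreover have "col (fst h) \<le> c" using ch hc by simp
  ultimately show "(\<lambda>(pre, g, suf). (butlast pre, (fst (last pre), p), suf)) \<tau> \<in> A2"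
    unfolding t A2_def by simp
  show "(\<lambda>(pre, g, suf). (pre @ [(fst g, q)], ((Q, Suc c), p), suf)) ((\<lambda>(pre, g, suf). (butlast pre, (fst (last pre), p), suf)) \<tau>) = \<tau>"
    unfolding t using sh by (cases h) simp
qed

lemma sgn2_sgn1: "sgn2 a b = (if a \<and> b then -1 else 1)" by (simp add: sgn2_def)

lemma gpar_pair: "gpar par (a, b) = (par (fst a) \<noteq> par (fst b))"
  by (simp add: gpar_def bpar_def row_def)

lemma cancel_b: "fa_add (fa_sum A2 V2) (fa_sum B5a V5) = fa_zero"
proof (rule pair_cancel[OF bij_b])
  fix \<tau> assume "\<tau> \<in> A2"
  then obtain pre a suf where t: "\<tau> = (pre, (a, p), suf)" and tr: "(pre, (a, p), suf) \<in> TR" and ca: "col a \<le> c"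
    by (rule A2_elim)
  have s1: "sc (a, p) = (-1) ^ (Suc c - col a)" using sc_nat[of "(a, p)"] ca by simp
  have s2: "sc (a, q) = (-1) ^ (c - col a)" using sc_nat[of "(a, q)"] ca by simp
  have A0: "sc (a, p) * sc (a, q) = -1"
  proof -
    have "Suc c - col a = Suc (c - col a)" using ca by simp
    then show ?thesis unfolding s1 s2 by (simp add: power_add[symmetric] power_mult_distrib)
  qed
  have co: "- sx ((Q, Suc c), p) * (sig (pre @ [(a, q)]) * sgn1 (par Q) * sig suf * eps x (pre @ [(a, q)]) * 1) * sgn1 (par Q)
      = - (- sx (a, p) * (sig pre * sgn1 (par (fst a)) * sig suf * eps x pre * sc (a, p)) * sc (a, q))"
  proof -
    have e: "eps x (pre @ [(a, q)]) = eps x pre * sgn2 (gpar par x) (gpar par (a, q))"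
      by (simp add: eps_append eps_Cons)
    have sg: "sig (pre @ [(a, q)]) = sig pre * sgn1 (par (fst a))" by (simp add: sig_append sig_Cons bpar_def row_def)
    have "- (- sx (a, p) * (sig pre * sgn1 (par (fst a)) * sig suf * eps x pre * sc (a, p)) * sc (a, q))
       = sx (a, p) * (sig pre * sgn1 (par (fst a)) * sig suf * eps x pre) * (sc (a, p) * sc (a, q))"
      by (simp add: mult_ac)
    also have "\<dots> = - sx (a, p) * (sig pre * sgn1 (par (fst a)) * sig suf * eps x pre)" using A0 by simp
    finally show ?thesis unfolding e sg sx_def gpar_pair
      by (simp add: sgn2_sgn1 sgn1_def)
  qed
  show "V5 ((\<lambda>(pre, g, suf). (pre @ [(fst g, q)], ((Q, Suc c), p), suf)) \<tau>) = fa_scale (- 1) (V2 \<tau>)"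
    unfolding t V2_def V5_def Phi_def sig_split
    using co by (simp add: sc_same_col)
qed

definition "A3b = {\<tau> \<in> TR. case \<tau> of (pre, g, suf) \<Rightarrow> g = (q, (P, c)) \<and> \<not> (suf \<noteq> [] \<and> col (fst (hd suf)) = Suc c)}"
definition "B5b = {\<tau> \<in> TR. case \<tau> of (pre, g, suf) \<Rightarrow> g = ((Q, Suc c), p) \<and> \<not> (pre \<noteq> [] \<and> col (snd (last pre)) = c)}"

lemma PRE_c: "PRE i pre Q c \<longleftrightarrow> PRE i pre Q (Suc c) \<and> \<not> (pre \<noteq> [] \<and> col (snd (last pre)) = c)"
  unfolding PRE_def by auto
lemma SUF_c: "SUF j suf P (Suc c) \<longleftrightarrow> SUF j suf P c \<and> \<not> (suf \<noteq> [] \<and> col (fst (hd suf)) = Suc c)"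
  unfolding SUF_def by auto

lemma bij_c: "bij_betw (\<lambda>(pre, g, suf). (pre, ((Q, Suc c), p), suf)) A3b B5b"
proof (rule my_bijI[where g="\<lambda>(pre, g, suf). (pre, (q, (P, c)), suf)"])
  have g3: "(q, (P, c)) \<in> PG" using P Q c1 cl by (simp add: PG_pair)
  have g5: "((Q, Suc c), p) \<in> PG" using P Q c1 cl by (simp add: PG_pair)
  fix \<tau> assume a: "\<tau> \<in> A3b"
  obtain pre g suf where t: "\<tau> = (pre, g, suf)" by (cases \<tau>)
  have tr: "(pre, g, suf) \<in> TR" and g: "g = (q, (P, c))" and nc: "\<not> (suf \<noteq> [] \<and> col (fst (hd suf)) = Suc c)"
    using a unfolding A3b_def t by auto
  have h: "PRE i pre Q c" "SUF j suf P c" "wt pre + 1 + wt suf = r" using tr unfolding g by (simp_all add: TR_iff)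
  have "(pre, ((Q, Suc c), p), suf) \<in> TR" using h nc g5 PRE_c SUF_c by (simp add: TR_iff)
  moreover have "\<not> (pre \<noteq> [] \<and> col (snd (last pre)) = c)" using h(1) PRE_c by blast
  ultimately show "(\<lambda>(pre, g, suf). (pre, ((Q, Suc c), p), suf)) \<tau> \<in> B5b" unfolding t B5b_def by simp
  show "(\<lambda>(pre, g, suf). (pre, (q, (P, c)), suf)) ((\<lambda>(pre, g, suf). (pre, ((Q, Suc c), p), suf)) \<tau>) = \<tau>"
    unfolding t g by simp
next
  have g3: "(q, (P, c)) \<in> PG" using P Q c1 cl by (simp add: PG_pair)
  fix \<tau> assume a: "\<tau> \<in> B5b"
  obtain pre g suf where t: "\<tau> = (pre, g, suf)" by (cases \<tau>)
  have tr: "(pre, g, suf) \<in> TR" and g: "g = ((Q, Suc c), p)" and nc: "\<not> (pre \<noteq> [] \<and> col (snd (last pre)) = c)"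
    using a unfolding B5b_def t by auto
  have h: "PRE i pre Q (Suc c)" "SUF j suf P (Suc c)" "wt pre + 1 + wt suf = r" using tr unfolding g by (simp_all add: TR_iff)
  have "(pre, (q, (P, c)), suf) \<in> TR" using h nc g3 PRE_c SUF_c by (simp add: TR_iff)
  moreover have "\<not> (suf \<noteq> [] \<and> col (fst (hd suf)) = Suc c)" using h(2) SUF_c by blast
  ultimately show "(\<lambda>(pre, g, suf). (pre, (q, (P, c)), suf)) \<tau> \<in> A3b" unfolding t A3b_def by simp
  show "(\<lambda>(pre, g, suf). (pre, ((Q, Suc c), p), suf)) ((\<lambda>(pre, g, suf). (pre, (q, (P, c)), suf)) \<tau>) = \<tau>"
    unfolding t g by simp
qed

lemma cancel_c: "fa_add (fa_sum A3b V3) (fa_sum B5b V5) = fa_zero"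
proof (rule pair_cancel[OF bij_c])
  fix \<tau> assume a: "\<tau> \<in> A3b"
  obtain pre g suf where t: "\<tau> = (pre, g, suf)" by (cases \<tau>)
  have g: "g = (q, (P, c))" using a unfolding A3b_def t by auto
  have k: "sx ((Q, Suc c), p) * sgn1 (par Q) = sgn1 (par P)"
    unfolding sx_def gpar_pair by (simp add: sgn2_sgn1 sgn1_def)
  have co: "\<And>X. sx ((Q, Suc c), p) * X * sgn1 (par Q) = X * sgn1 (par P)"
  proof -
    fix X
    have "sx ((Q, Suc c), p) * X * sgn1 (par Q) = X * (sx ((Q, Suc c), p) * sgn1 (par Q))" by (simp add: mult_ac)
    then show "sx ((Q, Suc c), p) * X * sgn1 (par Q) = X * sgn1 (par P)" using k by simp
  qed
  show "V5 ((\<lambda>(pre, g, suf). (pre, ((Q, Suc c), p), suf)) \<tau>) = fa_scale (- 1) (V3 \<tau>)"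
    unfolding t g V3_def V5_def Phi_def sig_split by (simp add: sc_same_col co)
qed


definition V0 where "V0 \<tau> = (case \<tau> of (pre, g, suf) \<Rightarrow>
      fa_scale (Phi pre g suf * (- sh (p, p) + sx g * sh (q, q))) (E (pre @ suf)))"
definition V4 where "V4 \<tau> = (case \<tau> of (pre, g, suf) \<Rightarrow>
      fa_scale (Phi pre g suf * cA (row (snd g))) (E (pre @ tl suf)))"

definition "A0 = {\<tau> \<in> TR. case \<tau> of (pre, g, suf) \<Rightarrow> g = (q, p)}"
definition "B4 = {\<tau> \<in> TR. case \<tau> of (pre, g, suf) \<Rightarrow> fst g = q \<and> col (snd g) = c \<and> suf \<noteq> [] \<and> snd (hd suf) = p}"

definition psi4 :: "(gen list \<times> gen \<times> gen list) \<times> nat \<Rightarrow> gen list \<times> gen \<times> gen list" where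
  "psi4 = (\<lambda>((pre, g, suf), K). (pre, (q, (K, c)), ((K, Suc c), p) # suf))"

lemma bij_d: "bij_betw psi4 (A0 \<times> {1..m+n}) B4"
proof (rule my_bijI[where g="\<lambda>(pre, g, suf). ((pre, (q, p), tl suf), row (snd g))"])
  fix z assume a: "z \<in> A0 \<times> {1..m+n}"
  obtain pre g suf K where z: "z = ((pre, g, suf), K)" by (cases z) auto
  have tr: "(pre, g, suf) \<in> TR" and g: "g = (q, p)" and K: "K \<in> {1..m+n}"
    using a unfolding A0_def z by auto
  have h: "PRE i pre Q c" "SUF j suf P (Suc c)" "wt pre + 2 + wt suf = r"
    using tr unfolding g by (simp_all add: TR_iff)
  have g1: "(q, (K, c)) \<in> PG" using K Q c1 cl by (simp add: PG_pair)
  have g2: "((K, Suc c), p) \<in> PG" using K P c1 cl by (simp add: PG_pair)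
  have "(pre, (q, (K, c)), ((K, Suc c), p) # suf) \<in> TR"
    unfolding TR_iff using h g1 g2 by (simp add: SUF_Cons wt_Cons)
  then show "psi4 z \<in> B4" unfolding z psi4_def B4_def by simp
  show "(\<lambda>(pre, g, suf). ((pre, (q, p), tl suf), row (snd g))) (psi4 z) = z"
    unfolding z psi4_def g by simp
next
  fix \<tau> assume a: "\<tau> \<in> B4"
  obtain pre g suf where t: "\<tau> = (pre, g, suf)" by (cases \<tau>)
  have tr: "(pre, g, suf) \<in> TR" and fg: "fst g = q" and cg: "col (snd g) = c" and ne: "suf \<noteq> []"
    and sp: "snd (hd suf) = p"
    using a unfolding B4_def t by auto
  obtain h suf' where s: "suf = h # suf'" using ne by (cases suf) auto
  obtain K where g: "g = (q, (K, c))" using fg cg by (cases g; cases "snd g") auto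
  have hh: "g \<in> PG" "PRE i pre Q c" "h \<in> PG" "row (fst h) = K" "c < col (fst h)"
     "SUF j suf' P (Suc c)" "wt pre + 1 + wt (h # suf') = r"
    using tr sp unfolding s g by (simp_all add: TR_iff SUF_Cons)
  have hc: "col (fst h) \<le> col (snd h)" using PG_col[OF hh(3)] .
  have fh: "fst h = (K, Suc c)" using hh(4) hh(5) hc sp s by (cases "fst h") auto
  have hq: "h = ((K, Suc c), p)" using fh sp s by (cases h) auto
  have K: "K \<in> {1..m+n}" using hh(1) g by (simp add: PG_pair)
  have qp: "(q, p) \<in> PG" using P Q c1 cl by (simp add: PG_pair)
  have "(pre, (q, p), suf') \<in> TR" unfolding TR_iff using hh qp hq by (simp add: wt_Cons)
  then show "(\<lambda>(pre, g, suf). ((pre, (q, p), tl suf), row (snd g))) \<tau> \<in> A0 \<times> {1..m+n}"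
    unfolding t A0_def s g using K by simp
  show "psi4 ((\<lambda>(pre, g, suf). ((pre, (q, p), tl suf), row (snd g))) \<tau>) = \<tau>"
    unfolding t psi4_def s g hq by simp
qed

lemma sum_sgn:
  assumes "card {k \<in> {1..m+n}. par k} = n"
  shows "(\<Sum>K\<in>{1..m+n}. sgn1 (par K)) = of_nat m - of_nat n"
proof -
  have "(\<Sum>K\<in>{1..m+n}. sgn1 (par K)) = (\<Sum>K\<in>{1..m+n}. 1 - 2 * (if par K then 1 else 0 :: complex))"
    by (rule sum.cong) (auto simp: sgn1_def)
  also have "\<dots> = of_nat (m + n) - 2 * of_nat (card ({1..m+n} \<inter> Collect par))"
    by (simp add: sum_subtractf sum_distrib_left[symmetric] sum.If_cases)
  also have "card ({1..m+n} \<inter> Collect par) = n"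
  proof -
    have "{1..m+n} \<inter> Collect par = {k \<in> {1..m+n}. par k}" by auto
    thus ?thesis using assms by (simp only:)
  qed
  finally show ?thesis by simp
qed

lemma rho_diff: "(of_int (rho m n l c) :: complex) - of_int (rho m n l (Suc c)) = - (of_nat m - of_nat n)"
proof -
  have "rho m n l c - rho m n l (Suc c) = - (int m - int n)" unfolding rho_def by (simp add: algebra_simps)
  then have "(of_int (rho m n l c - rho m n l (Suc c)) :: complex) = of_int (- (int m - int n))" by simp
  thus ?thesis by simp
qed

lemma cancel_d:
  assumes card: "card {k \<in> {1..m+n}. par k} = n"
  shows "fa_add (fa_sum A0 V0) (fa_sum B4 V4) = fa_zero"
proof -
  have fA0: "finite A0" unfolding A0_def using finite_TR by simp
  have "fa_sum B4 V4 = fa_sum (A0 \<times> {1..m+n}) (\<lambda>z. V4 (psi4 z))" by (rule fa_sum_bij[OF bij_d])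
  also have "\<dots> = fa_sum A0 (\<lambda>\<tau>. fa_sum {1..m+n} (\<lambda>K. V4 (psi4 (\<tau>, K))))"
    by (rule fa_sum_cart[OF fA0]) simp
  also have "\<dots> = fa_sum A0 (\<lambda>\<tau>. fa_scale (-1) (V0 \<tau>))"
  proof (rule fa_sum_cong)
    fix \<tau> assume a: "\<tau> \<in> A0"
    obtain pre g suf where t: "\<tau> = (pre, g, suf)" by (cases \<tau>)
    have g: "g = (q, p)" using a unfolding A0_def t by auto
    define Y where "Y = sig pre * sgn1 (par Q) * sig suf * eps x pre"
    have cK: "Phi pre (q, (K, c)) (((K, Suc c), p) # suf) * cA K = - (Y * sgn1 (par P) * sgn1 (par K))" for K
      unfolding Phi_def sig_split cA_def Y_def
      by (cases "par K"; cases "par P") (simp_all add: sc_same_col sig_Cons bpar_def row_def sgn2_def sgn1_def)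
    have "fa_sum {1..m+n} (\<lambda>K. V4 (psi4 (\<tau>, K))) = fa_sum {1..m+n} (\<lambda>K. fa_scale (- (Y * sgn1 (par P) * sgn1 (par K))) (E (pre @ suf)))"
      by (rule fa_sum_cong) (simp add: t g psi4_def V4_def cK)
    also have "\<dots> = fa_scale (\<Sum>K\<in>{1..m+n}. - (Y * sgn1 (par P) * sgn1 (par K))) (E (pre @ suf))"
      by (rule fa_sum_scale_const)
    also have "(\<Sum>K\<in>{1..m+n}. - (Y * sgn1 (par P) * sgn1 (par K))) = - (Y * sgn1 (par P) * (of_nat m - of_nat n))"
      using sum_sgn[OF card] by (simp add: sum_negf sum_distrib_left[symmetric])
    also have "\<dots> = - (Phi pre g suf * (- sh (p, p) + sx g * sh (q, q)))"
    proof -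
      have scqp: "sc (q, p) = -1" using sc_nat[of "(q, p)"] by simp
      have sxg: "sx (q, p) = sgn1 (par P) * sgn1 (par Q)"
        by (cases "par P"; cases "par Q") (simp_all add: sx_def gpar_pair sgn2_def sgn1_def)
      have shp: "sh (p, p) = sgn1 (par P) * of_int (rho m n l (Suc c))" by (simp add: shift_def bpar_def)
      have shq: "sh (q, q) = sgn1 (par Q) * of_int (rho m n l c)" by (simp add: shift_def bpar_def)
      have qq: "sgn1 (par Q) * sgn1 (par Q) = 1" by (simp add: sgn1_def)
      have "- sh (p, p) + sx (q, p) * sh (q, q) = sgn1 (par P) * (of_int (rho m n l c) - of_int (rho m n l (Suc c)))"
        unfolding shp shq sxg by (cases "par P"; cases "par Q") (simp_all add: sgn1_def algebra_simps)
      also have "\<dots> = - (sgn1 (par P) * (of_nat m - of_nat n))" by (simp only: rho_diff) (simp add: algebra_simps)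
      finally have k: "- sh (p, p) + sx (q, p) * sh (q, q) = - (sgn1 (par P) * (of_nat m - of_nat n))" .
      show ?thesis unfolding g Phi_def sig_split Y_def k scqp
        by (simp add: sig_Cons bpar_def row_def mult_ac)
    qed
    finally show "fa_sum {1..m+n} (\<lambda>K. V4 (psi4 (\<tau>, K))) = fa_scale (-1) (V0 \<tau>)"
      by (simp add: t g V0_def)
  qed
  finally have "fa_sum B4 V4 = fa_sum A0 (\<lambda>\<tau>. fa_scale (-1) (V0 \<tau>))" .
  thus ?thesis by (intro ext) (simp add: fa_sum_def fa_add_def fa_scale_def fa_zero_def sum_negf)
qed

end

context Main begin

lemma fa_sum_mono_eq: "A = B \<Longrightarrow> fa_sum A F = fa_sum B F" by simp

lemma sum_P:
  "fa_sum TR P1 = fa_sum A1 V1" "fa_sum TR P2 = fa_sum A2 V2" "fa_sum TR P4 = fa_sum B4 V4"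
  "fa_sum TR P0 = fa_sum A0 V0"
  "fa_sum TR P3 = fa_add (fa_sum B3a V3) (fa_sum A3b V3)"
  "fa_sum TR P5 = fa_add (fa_sum B5a V5) (fa_sum B5b V5)"
proof -
  have f: "finite TR" by (rule finite_TR)
  have "P1 = (\<lambda>\<tau>. if (case \<tau> of (pre, g, suf) \<Rightarrow> fst g = q \<and> c < col (snd g)) then V1 \<tau> else fa_zero)"
    by (intro ext) (simp add: P1_def V1_def split: prod.split)
  then show "fa_sum TR P1 = fa_sum A1 V1" unfolding A1_def by (simp add: fa_sum_if[OF f])
  have "P2 = (\<lambda>\<tau>. if (case \<tau> of (pre, g, suf) \<Rightarrow> snd g = p \<and> col (fst g) \<le> c) then V2 \<tau> else fa_zero)"
    by (intro ext) (simp add: P2_def V2_def split: prod.split)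
  then show "fa_sum TR P2 = fa_sum A2 V2" unfolding A2_def by (simp add: fa_sum_if[OF f])
  have "P4 = (\<lambda>\<tau>. if (case \<tau> of (pre, g, suf) \<Rightarrow> fst g = q \<and> col (snd g) = c \<and> suf \<noteq> [] \<and> snd (hd suf) = p) then V4 \<tau> else fa_zero)"
    by (intro ext) (simp add: P4_def V4_def split: prod.split)
  then show "fa_sum TR P4 = fa_sum B4 V4" unfolding B4_def by (simp add: fa_sum_if[OF f])
  have "P0 = (\<lambda>\<tau>. if (case \<tau> of (pre, g, suf) \<Rightarrow> g = (q, p)) then V0 \<tau> else fa_zero)"
    by (intro ext) (simp add: P0_def V0_def split: prod.split)
  then show "fa_sum TR P0 = fa_sum A0 V0" unfolding A0_def by (simp add: fa_sum_if[OF f])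
  define S3 where "S3 = {\<tau> \<in> TR. case \<tau> of (pre, g, suf) \<Rightarrow> g = (q, (P, c))}"
  have fS3: "finite S3" unfolding S3_def using f by simp
  have "P3 = (\<lambda>\<tau>. if (case \<tau> of (pre, g, suf) \<Rightarrow> g = (q, (P, c))) then V3 \<tau> else fa_zero)"
    by (intro ext) (simp add: P3_def V3_def split: prod.split)
  then have "fa_sum TR P3 = fa_sum S3 V3" unfolding S3_def by (simp add: fa_sum_if[OF f])
  also have "\<dots> = fa_add (fa_sum {\<tau>\<in>S3. case \<tau> of (pre, g, suf) \<Rightarrow> suf \<noteq> [] \<and> col (fst (hd suf)) = Suc c} V3)
                         (fa_sum {\<tau>\<in>S3. \<not> (case \<tau> of (pre, g, suf) \<Rightarrow> suf \<noteq> [] \<and> col (fst (hd suf)) = Suc c)} V3)"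
    by (rule fa_sum_split[OF fS3])
  also have "{\<tau>\<in>S3. case \<tau> of (pre, g, suf) \<Rightarrow> suf \<noteq> [] \<and> col (fst (hd suf)) = Suc c} = B3a"
    unfolding S3_def B3a_def by (auto split: prod.splits)
  also have "{\<tau>\<in>S3. \<not> (case \<tau> of (pre, g, suf) \<Rightarrow> suf \<noteq> [] \<and> col (fst (hd suf)) = Suc c)} = A3b"
    unfolding S3_def A3b_def by (auto split: prod.splits)
  finally show "fa_sum TR P3 = fa_add (fa_sum B3a V3) (fa_sum A3b V3)" .
  define S5 where "S5 = {\<tau> \<in> TR. case \<tau> of (pre, g, suf) \<Rightarrow> g = ((Q, Suc c), p)}"
  have fS5: "finite S5" unfolding S5_def using f by simp
  have "P5 = (\<lambda>\<tau>. if (case \<tau> of (pre, g, suf) \<Rightarrow> g = ((Q, Suc c), p)) then V5 \<tau> else fa_zero)"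
    by (intro ext) (simp add: P5_def V5_def split: prod.split)
  then have "fa_sum TR P5 = fa_sum S5 V5" unfolding S5_def by (simp add: fa_sum_if[OF f])
  also have "\<dots> = fa_add (fa_sum {\<tau>\<in>S5. case \<tau> of (pre, g, suf) \<Rightarrow> pre \<noteq> [] \<and> col (snd (last pre)) = c} V5)
                         (fa_sum {\<tau>\<in>S5. \<not> (case \<tau> of (pre, g, suf) \<Rightarrow> pre \<noteq> [] \<and> col (snd (last pre)) = c)} V5)"
    by (rule fa_sum_split[OF fS5])
  also have "{\<tau>\<in>S5. case \<tau> of (pre, g, suf) \<Rightarrow> pre \<noteq> [] \<and> col (snd (last pre)) = c} = B5a"
    unfolding S5_def B5a_def by (auto split: prod.splits)
  also have "{\<tau>\<in>S5. \<not> (case \<tau> of (pre, g, suf) \<Rightarrow> pre \<noteq> [] \<and> col (snd (last pre)) = c)} = B5b"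
    unfolding S5_def B5b_def by (auto split: prod.splits)
  finally show "fa_sum TR P5 = fa_add (fa_sum B5a V5) (fa_sum B5b V5)" .
qed

lemma fa_add_assoc: "fa_add (fa_add a b) c' = fa_add a (fa_add b c')"
  by (rule ext) (simp add: fa_add_def)
lemma fa_add_left_commute: "fa_add a (fa_add b c') = fa_add b (fa_add a c')"
  by (rule ext) (simp add: fa_add_def)

lemma sum_Red_zero:
  assumes card: "card {k \<in> {1..m+n}. par k} = n"
  shows "fa_sum TR Red = fa_zero"
proof -
  have "fa_sum TR Red = fa_sum TR (\<lambda>\<tau>. fa_add (P1 \<tau>) (fa_add (P3 \<tau>) (fa_add (P4 \<tau>) (fa_add (P2 \<tau>) (fa_add (P5 \<tau>) (P0 \<tau>))))))"
    by (rule fa_sum_cong) (rule Red_decomp)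
  also have "\<dots> = fa_add (fa_sum TR P1) (fa_add (fa_sum TR P3) (fa_add (fa_sum TR P4) (fa_add (fa_sum TR P2) (fa_add (fa_sum TR P5) (fa_sum TR P0)))))"
    by (simp add: fa_sum_add)
  also have "\<dots> = fa_add (fa_add (fa_sum A1 V1) (fa_sum B3a V3)) (fa_add (fa_add (fa_sum A2 V2) (fa_sum B5a V5))
      (fa_add (fa_add (fa_sum A3b V3) (fa_sum B5b V5)) (fa_add (fa_sum A0 V0) (fa_sum B4 V4))))"
    unfolding sum_P by (rule ext) (simp add: fa_add_def algebra_simps)
  also have "\<dots> = fa_zero" by (simp add: cancel_a cancel_b cancel_c cancel_d[OF card])
  finally show ?thesis .
qed

lemma eps_ch: "eps x ps * ch x = ch x"
proof (cases "P = Q")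
  case True
  then have "gpar par x = False" by (simp add: gpar_same_row)
  then show ?thesis by (simp add: eps_even)
next
  case False
  then show ?thesis using chi_adj[OF P Q] by simp
qed

lemma sum_Xp: "fa_sum (VS r i j) (\<lambda>ps. fa_scale (sig ps) (Xp x ps)) =
   fa_sum TR (\<lambda>(pre, g, suf). fa_scale (sig (pre @ g # suf)) (fa_scale (eps x pre) (fa_mult (E pre) (fa_mult (Bt x g) (E suf)))))"
proof (rule ext)
  fix w
  define F where "F = (\<lambda>(pre, g, suf). fa_scale (eps x pre) (fa_mult (E pre) (fa_mult (Bt x g) (E suf))))"
  have "fa_sum (VS r i j) (\<lambda>ps. fa_scale (sig ps) (Xp x ps)) w = (\<Sum>ps\<in>VS r i j. \<Sum>\<tau>\<in>splitsC ps. sig ps * F \<tau> w)"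
    unfolding Xp_sum F_def by (simp add: fa_sum_def fa_scale_def sum_distrib_left case_prod_unfold)
  also have "\<dots> = (\<Sum>z\<in>(SIGMA ps:VS r i j. splitsC ps). sig (fst z) * F (snd z) w)"
    by (subst sum.Sigma[OF finite_VS]) (auto simp: case_prod_unfold)
  also have "\<dots> = (\<Sum>\<tau>\<in>TR. sig (fst \<tau> @ fst (snd \<tau>) # snd (snd \<tau>)) * F \<tau> w)"
    by (rule sum.reindex_bij_witness[where j="\<lambda>z. snd z" and i="\<lambda>\<tau>. (fst \<tau> @ fst (snd \<tau>) # snd (snd \<tau>), \<tau>)"])
       (auto simp: TR_def splitsC_def)
  finally show "fa_sum (VS r i j) (\<lambda>ps. fa_scale (sig ps) (Xp x ps)) w =
     fa_sum TR (\<lambda>(pre, g, suf). fa_scale (sig (pre @ g # suf)) (fa_scale (eps x pre) (fa_mult (E pre) (fa_mult (Bt x g) (E suf))))) w"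
    unfolding F_def by (simp add: fa_sum_def fa_scale_def case_prod_unfold)
qed

theorem adjacent:
  assumes card: "card {k \<in> {1..m+n}. par k} = n" and r: "1 \<le> r"
  shows "iq (fa_mult (fa_gen x) (tT m n l par r i j)) (fa_scale (ch x) (tT m n l par r i j))"
proof -
  let ?V = "VS r i j"
  have fV: "finite ?V" by (rule finite_VS)
  have VG: "\<And>ps. ps \<in> ?V \<Longrightarrow> set ps \<subseteq> G"
    unfolding VS_def valid_def using PG_G by blast
  have "fa_mult (fa_gen x) (tT m n l par r i j) = fa_sum ?V (\<lambda>ps. fa_scale (sig ps) (fa_mult (fa_gen x) (E ps)))"
    unfolding tT_eq[OF r] by (simp add: fa_mult_sum_right[OF fV] fa_mult_scale_right)
  also have "iq \<dots> (fa_sum ?V (\<lambda>ps. fa_scale (sig ps) (fa_add (Xp x ps) (fa_scale (eps x ps) (fa_scale (ch x) (E ps))))))"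
  proof (rule ieq_sum[OF fV], rule ieq_scale)
    fix ps assume ps: "ps \<in> ?V"
    have "iq (fa_mult (fa_gen x) (E ps)) (fa_add (Xp x ps) (fa_scale (eps x ps) (fa_mult (E ps) (fa_gen x))))"
      by (rule jeq_ieq, rule expand) (use x_MG mgens_gens VG[OF ps] in auto)
    also have "iq \<dots> (fa_add (Xp x ps) (fa_scale (eps x ps) (fa_scale (ch x) (E ps))))"
      by (intro ieq_add ieq_refl ieq_scale right_gen x_MG E_FA VG[OF ps])
    finally show "iq (fa_mult (fa_gen x) (E ps)) (fa_add (Xp x ps) (fa_scale (eps x ps) (fa_scale (ch x) (E ps))))" .
  qed
  also have "\<dots> = fa_add (fa_sum ?V (\<lambda>ps. fa_scale (sig ps) (Xp x ps))) (fa_scale (ch x) (tT m n l par r i j))"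
  proof -
    have e2: "\<And>ps z. eps x ps * (ch x * z) = ch x * z"
      by (simp add: mult.assoc[symmetric] eps_ch)
    have "(\<lambda>ps. fa_scale (sig ps) (fa_add (Xp x ps) (fa_scale (eps x ps) (fa_scale (ch x) (E ps)))))
       = (\<lambda>ps. fa_add (fa_scale (sig ps) (Xp x ps)) (fa_scale (ch x) (fa_scale (sig ps) (E ps))))"
      by (intro ext) (simp add: fa_add_def fa_scale_def e2 distrib_left mult.left_commute)
    then show ?thesis unfolding tT_eq[OF r] by (simp add: fa_sum_add fa_scale_sum)
  qed
  also have "iq \<dots> (fa_add (fa_sum TR Red) (fa_scale (ch x) (tT m n l par r i j)))"
  proof (intro ieq_add ieq_refl)
    show "iq (fa_sum ?V (\<lambda>ps. fa_scale (sig ps) (Xp x ps))) (fa_sum TR Red)"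
      unfolding sum_Xp
    proof (rule ieq_sum[OF finite_TR])
      fix \<tau> assume t: "\<tau> \<in> TR"
      obtain pre g suf where tt: "\<tau> = (pre, g, suf)" by (cases \<tau>)
      have v: "valid i j (pre @ g # suf)" using t unfolding tt TR_def VS_def by simp
      have "iq (fa_scale (sig (pre @ g # suf) * eps x pre) (fa_mult (E pre) (fa_mult (Bt x g) (E suf))))
          (fa_scale (sig (pre @ g # suf) * eps x pre) (fa_scale (sc g) (fa_diff (LL pre g suf) (fa_scale (sx g) (RR pre g suf)))))"
        by (rule ieq_scale, rule red[OF v, folded sx_def])
      then show "iq ((\<lambda>(pre, g, suf). fa_scale (sig (pre @ g # suf)) (fa_scale (eps x pre) (fa_mult (E pre) (fa_mult (Bt x g) (E suf))))) \<tau>) (Red \<tau>)"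
        unfolding tt Red_def by (simp add: mult.assoc)
    qed
  qed
  also have "\<dots> = fa_scale (ch x) (tT m n l par r i j)" by (simp add: sum_Red_zero[OF card])
  finally show ?thesis .
qed

end

lemma tT_FA: "tT m n l par r i j \<in> FA m n l"
proof (cases "r = 0")
  case True then show ?thesis by (simp add: tT_def FA_one FA_zero)
next
  case False
  interpret W m n l par .
  have "tT m n l par r i j = fa_sum (VS r i j) (\<lambda>ps. fa_scale (sig ps) (E ps))"
    using False by (simp add: tT_eq)
  also have "\<dots> \<in> FA m n l"
  proof (rule FA_sum[OF finite_VS], rule FA_scale, rule E_FA)
    fix ps assume "ps \<in> VS r i j"
    then show "set ps \<subseteq> G" unfolding VS_def valid_def using PG_G by blast
  qed
  finally show ?thesis .
qed

lemma tT_supp: "supp_in (pgens m n l) (tT m n l par r i j)"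
proof (cases "r = 0")
  case True then show ?thesis by (simp add: tT_def supp_one supp_zero)
next
  case False
  interpret W m n l par .
  have E_supp: "set ps \<subseteq> PG \<Longrightarrow> supp_in PG (E ps)" for ps
  proof (induction ps)
    case Nil then show ?case by (simp add: supp_one)
  next
    case (Cons g ps)
    have "supp_in PG (et g)" unfolding etilde_def using Cons.prems
      by (intro supp_scale supp_add supp_gen supp_one) auto
    then show ?case using Cons by (simp add: E_Cons supp_mult)
  qed
  have "tT m n l par r i j = fa_sum (VS r i j) (\<lambda>ps. fa_scale (sig ps) (E ps))"
    using False by (simp add: tT_eq)
  moreover have "supp_in PG (fa_sum (VS r i j) (\<lambda>ps. fa_scale (sig ps) (E ps)))"
    by (intro supp_sum supp_scale E_supp) (auto simp: VS_def valid_def)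
  ultimately show ?thesis by simp
qed

context W begin

lemma inv_adj:
  assumes card: "card {k \<in> {1..m+n}. par k} = n"
    and y: "y = ((P, Suc c), (Q, c))" "y \<in> MG"
  shows "iq (fa_mult (fa_gen y) (tT m n l par r i j)) (fa_scale (ch y) (tT m n l par r i j))"
proof (cases "r = 0")
  case True
  show ?thesis
  proof (cases "i = j")
    case True2: True
    have "iq (fa_mult fa_one (fa_gen y)) (fa_scale (ch y) fa_one)" by (rule right_gen[OF y(2) FA_one])
    then show ?thesis using True True2 by (simp add: tT_def)
  next
    case False
    then show ?thesis using True by (simp add: tT_def ieq_refl)
  qed
next
  case False
  have yG: "y \<in> G" using y(2) mgens_gens by blast
  have P: "P \<in> {1..m+n}" and Q: "Q \<in> {1..m+n}" and c1: "1 \<le> c" and cl: "Suc c \<le> l"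
    using yG y(1) by (auto simp: gens_def)
  interpret Main m n l par P Q c i j r by unfold_locales (use P Q c1 cl in auto)
  show ?thesis unfolding y(1) by (rule adjacent[OF card]) (use False in simp)
qed

lemma inv_gen:
  assumes card: "card {k \<in> {1..m+n}. par k} = n"
  shows "y \<in> MG \<Longrightarrow> iq (fa_mult (fa_gen y) (tT m n l par r i j)) (fa_scale (ch y) (tT m n l par r i j))"
proof (induction "col (fst y) - col (snd y)" arbitrary: y rule: less_induct)
  case less
  let ?t = "tT m n l par r i j"
  have yG: "y \<in> G" using less.prems mgens_gens by blast
  obtain P c' Q c where y: "y = ((P, c'), (Q, c))" by (cases y) auto
  have P: "P \<in> {1..m+n}" and Q: "Q \<in> {1..m+n}" and c1: "1 \<le> c" and cl: "c' \<le> l" and cc: "c < c'"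
    using yG less.prems y by (auto simp: gens_def mgens_def)
  show ?case
  proof (cases "c' = Suc c")
    case True
    show ?thesis by (rule inv_adj[OF card _ less.prems]) (simp add: y True)
  next
    case False
    then have cc2: "Suc c < c'" using cc by simp
    define s where "s = (P, Suc c)"
    define x1 where "x1 = ((P, c'), s)"
    define x2 where "x2 = (s, (Q, c))"
    have x1M: "x1 \<in> MG" using P cl cc2 c1 by (simp add: x1_def s_def mgens_def gens_def)
    have x2M: "x2 \<in> MG" using P Q cl cc2 c1 by (simp add: x2_def s_def mgens_def gens_def)
    have tFA: "?t \<in> FA m n l" by (rule tT_FA)
    have g1: "fa_gen x1 \<in> FA m n l" "fa_gen x2 \<in> FA m n l" using x1M x2M by (simp_all add: FA_gen mgens_gens)
    have IH1: "iq (fa_mult (fa_gen x1) ?t) (fa_scale (ch x1) ?t)"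
      by (rule less.hyps[OF _ x1M]) (use cc2 cc in \<open>simp add: x1_def s_def y\<close>)
    have IH2: "iq (fa_mult (fa_gen x2) ?t) (fa_scale (ch x2) ?t)"
      by (rule less.hyps[OF _ x2M]) (use cc2 cc in \<open>simp add: x2_def s_def y\<close>)
    have s1: "sgn2 (gpar par x1) (gpar par x2) = 1"
      by (simp add: x1_def s_def gpar_def bpar_def sgn2_def)
    have br: "gl_br par x1 x2 = fa_gen y"
      unfolding gl_br_def using cc by (intro ext) (auto simp: x1_def x2_def s_def y fa_diff_def fa_scale_def fa_zero_def)
    have J: "jq (fa_diff (fa_mult (fa_gen x1) (fa_gen x2)) (fa_mult (fa_gen x2) (fa_gen x1))) (fa_gen y)"
      using J_rel[OF mgens_gens[OF x1M] mgens_gens[OF x2M], of par]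
      unfolding jeq_def Urel_def fa_sbr_def s1 br by simp
    have "iq (fa_mult (fa_gen y) ?t) (fa_mult (fa_diff (fa_mult (fa_gen x1) (fa_gen x2)) (fa_mult (fa_gen x2) (fa_gen x1))) ?t)"
      by (rule jeq_ieq, rule jeq_right[OF jeq_sym[OF J] tFA])
    also have "\<dots> = fa_diff (fa_mult (fa_gen x1) (fa_mult (fa_gen x2) ?t)) (fa_mult (fa_gen x2) (fa_mult (fa_gen x1) ?t))"
      by (simp add: fa_mult_diff_left fa_mult_assoc)
    also have "iq \<dots> (fa_diff (fa_mult (fa_gen x1) (fa_scale (ch x2) ?t)) (fa_mult (fa_gen x2) (fa_scale (ch x1) ?t)))"
      by (intro ieq_diff ieq_left IH1 IH2 g1)
    also have "\<dots> = fa_diff (fa_scale (ch x2) (fa_mult (fa_gen x1) ?t)) (fa_scale (ch x1) (fa_mult (fa_gen x2) ?t))"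
      by (simp add: fa_mult_scale_right)
    also have "iq \<dots> (fa_diff (fa_scale (ch x2) (fa_scale (ch x1) ?t)) (fa_scale (ch x1) (fa_scale (ch x2) ?t)))"
      by (intro ieq_diff ieq_scale IH1 IH2)
    also have "\<dots> = fa_scale (ch y) ?t"
    proof -
      have "ch y = 0" using yG cc2 by (simp add: chi_val y)
      then show ?thesis by (intro ext) (simp add: fa_diff_def fa_scale_def mult.commute)
    qed
    finally show ?thesis .
  qed
qed

end

theorem proposition4p2:
  fixes m n l :: nat and par :: "nat \<Rightarrow> bool" and i j r :: nat and c :: "gen \<Rightarrow> complex"
  assumes "card {k \<in> {1..m+n}. par k} = n"
    and "i \<in> {1..m+n}" and "j \<in> {1..m+n}" and "r \<le> l"
  shows "tT m n l par r i j \<in> Up m n l par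
    \<and> br_m m n l par c (par i \<noteq> par j) (tT m n l par r i j) \<in> Ichi m n l par"
proof
  show "tT m n l par r i j \<in> Up m n l par"
    unfolding Up_def
  proof (intro CollectI exI conjI)
    show "tT m n l par r i j = fa_add (tT m n l par r i j) fa_zero" by simp
    show "tT m n l par r i j \<in> FA m n l" by (rule tT_FA)
    show "\<forall>w. tT m n l par r i j w \<noteq> 0 \<longrightarrow> set w \<subseteq> pgens m n l"
      using tT_supp unfolding supp_in_def by blast
    show "fa_zero \<in> Jideal m n l par" by (rule J_zero)
  qed
next
  interpret W m n l par .
  let ?t = "tT m n l par r i j"
  let ?q = "par i \<noteq> par j"
  show "br_m m n l par c ?q ?t \<in> Ichi m n l par"
    unfolding br_m_def
  proof (rule I_sum)
    show "finite MG" by (rule finite_subset[of _ "gens m n l"]) (auto simp: mgens_def)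
  next
    fix g assume g: "g \<in> MG"
    have tFA: "?t \<in> FA m n l" by (rule tT_FA)
    have a: "iq (fa_mult (fa_gen g) ?t) (fa_scale (ch g) ?t)" by (rule inv_gen[OF assms(1) g])
    have b: "iq (fa_mult ?t (fa_gen g)) (fa_scale (ch g) ?t)" by (rule right_gen[OF g tFA])
    have "iq (fa_sbr (gpar par g) ?q (fa_gen g) ?t) (fa_diff (fa_scale (ch g) ?t) (fa_scale (sgn2 (gpar par g) ?q) (fa_scale (ch g) ?t)))"
      unfolding fa_sbr_def by (intro ieq_diff ieq_scale a b)
    also have "fa_diff (fa_scale (ch g) ?t) (fa_scale (sgn2 (gpar par g) ?q) (fa_scale (ch g) ?t)) = fa_zero"
    proof (cases "ch g = 0")
      case True then show ?thesis by (intro ext) (simp add: fa_diff_def fa_scale_def fa_zero_def)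
    next
      case False
      then have "row (fst g) = row (snd g)" using chi_val[OF mgens_gens[OF g]] by (auto split: if_splits)
      then have "gpar par g = False" by (simp add: gpar_def bpar_def)
      then show ?thesis by (intro ext) (simp add: fa_diff_def fa_scale_def fa_zero_def sgn2_def)
    qed
    finally have "fa_sbr (gpar par g) ?q (fa_gen g) ?t \<in> Ichi m n l par"
      unfolding ieq_def by (simp add: fa_diff_def fa_zero_def)
    then show "fa_scale (c g) (fa_sbr (gpar par g) ?q (fa_gen g) ?t) \<in> Ichi m n l par" by (rule I_scale)
  qed
qed

end
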